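(* For every WS-HSA scheme, and every $u\in[U]$, $m\in[M]$, $n\in[N]$ with $\mathcal S_m\cap\mathcal T_n=\emptyset$ and $|(\mathcal S_m\cap\mathcal K_u)\cup\mathcal T_n|\le K-1$: (a) $H\big(\{Z_{i,j}\}_{(i,j)\in\mathcal S_m\cap\mathcal K_u}\mid\{Z_{i,j}\}_{(i,j)\in\mathcal T_n}\big)\ge|\mathcal S_m\cap\mathcal K_u|\,L$; (b) $H\big(\{Z_{i,j}\}_{(i,j)\in\mathcal K_{\mathcal U^{(m,n)}}}\mid\{Z_{i,j}\}_{(i,j)\in\mathcal T_n}\big)\ge(|\mathcal U^{(m,n)}|-1)L$ if $|\mathcal K_{\mathcal U^{(m,n)}}\cup\mathcal T_n|=K$, and $\ge|\mathcal U^{(m,n)}|\,L$ otherwise.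
   Context: Setup. Fix integers $U\ge 2$ and $V_1,\dots,V_U\ge 1$. Users are pairs $(u,v)$ with $u\in[U]$, $v\in[V_u]$; $\mathcal K_u=\{(u,v):v\in[V_u]\}$, $\mathcal K=\bigcup_u\mathcal K_u$, $K=|\mathcal K|$; for $\mathcal U\subseteq[U]$, $\mathcal K_{\mathcal U}=\bigcup_{u\in\mathcal U}\mathcal K_u$. Given are a family $\{\mathcal S_1,\dots,\mathcal S_M\}$ of subsets of $\mathcal K$ (security input sets) and a family $\{\mathcal T_1,\dots,\mathcal T_N\}$ of subsets of $\mathcal K$ (collusion sets), both closed under taking subsets. $\mathcal U^{(m,n)}=\{u\in[U]:\mathcal S_m\cap\mathcal K_u\ne\emptyset,\ \mathcal K_u\subseteq\mathcal S_m\cup\mathcal T_n\}$. A WS-HSA scheme with input length $L$ over a finite field $\mathbb F_q$ consists of jointly distributed random variables: inputs $W_{u,v}$, each uniform on $\mathbb F_q^L$; a source key $Z_\Sigma$; individual keys $Z_{u,v}$; messages $X_{u,v}$ and $Y_u$; entropies in base $q$. They satisfy: (i) $H(\{W_{u,v}\}_{\mathcal K},\{Z_{u,v}\}_{\mathcal K})=\sum_{\mathcal K}H(W_{u,v})+H(\{Z_{u,v}\}_{\mathcal K})$; (ii) $H(\{Z_{u,v}\}_{\mathcal K}\mid Z_\Sigma)=0$; (iii) $H(X_{u,v}\mid W_{u,v},Z_{u,v})=0$; (iv) $H(Y_u\mid\{X_{u,v}\}_{v\in[V_u]})=0$; (v) $H(\sum_{\mathcal K}W_{u,v}\mid Y_1,\dots,Y_U)=0$;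 (vi) $I(Y_1,\dots,Y_U;\{W_{u,v}\}_{\mathcal S_m}\mid\sum_{\mathcal K}W_{u,v},\{W_{i,j},Z_{i,j}\}_{\mathcal T_n})=0$ for all $m,n$; (vii) $I(\{X_{u,v}\}_{v\in[V_u]};\{W_{i,j}\}_{\mathcal S_m}\mid\{W_{i,j},Z_{i,j}\}_{\mathcal T_n})=0$ for all $u,m,n$. *)

theory Defs
  imports "HOL-Probability.Probability_Mass_Function"
begin

definition ent :: "real \<Rightarrow> 'w pmf \<Rightarrow> ('w \<Rightarrow> 'a) \<Rightarrow> real" where
  "ent b p X = (\<Sum>x \<in> X ` set_pmf p.
      - (measure_pmf.prob p (X -` {x}) * log b (measure_pmf.prob p (X -` {x}))))"

definition cent :: "real \<Rightarrow> 'w pmf \<Rightarrow> ('w \<Rightarrow> 'a) \<Rightarrow> ('w \<Rightarrow> 'c) \<Rightarrow> real" where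
  "cent b p X Y = ent b p (\<lambda>\<omega>. (X \<omega>, Y \<omega>)) - ent b p Y"

definition cmi :: "real \<Rightarrow> 'w pmf \<Rightarrow> ('w \<Rightarrow> 'a) \<Rightarrow> ('w \<Rightarrow> 'c) \<Rightarrow> ('w \<Rightarrow> 'd) \<Rightarrow> real" where
  "cmi b p X Y Z = ent b p (\<lambda>\<omega>. (X \<omega>, Z \<omega>)) + ent b p (\<lambda>\<omega>. (Y \<omega>, Z \<omega>))
     - ent b p (\<lambda>\<omega>. (X \<omega>, Y \<omega>, Z \<omega>)) - ent b p Z"

definition fam :: "('i \<Rightarrow> 'w \<Rightarrow> 'a) \<Rightarrow> 'i set \<Rightarrow> 'w \<Rightarrow> ('i \<Rightarrow> 'a)" where
  "fam F A = (\<lambda>\<omega>. restrict (\<lambda>k. F k \<omega>) A)"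

definition Kset_u :: "(nat \<Rightarrow> nat) \<Rightarrow> nat \<Rightarrow> (nat \<times> nat) set" where
  "Kset_u V u = {(u, v) | v. v \<in> {1..V u}}"

definition Kset :: "nat \<Rightarrow> (nat \<Rightarrow> nat) \<Rightarrow> (nat \<times> nat) set" where
  "Kset U V = (\<Union>u\<in>{1..U}. Kset_u V u)"

definition KsetU :: "(nat \<Rightarrow> nat) \<Rightarrow> nat set \<Rightarrow> (nat \<times> nat) set" where
  "KsetU V UU = (\<Union>u\<in>UU. Kset_u V u)"

definition Uset :: "nat \<Rightarrow> (nat \<Rightarrow> nat) \<Rightarrow> (nat \<times> nat) set \<Rightarrow> (nat \<times> nat) set \<Rightarrow> nat set" where
  "Uset U V Sm Tn = {u \<in> {1..U}. Sm \<inter> Kset_u V u \<noteq> {} \<and> Kset_u V u \<subseteq> Sm \<union> Tn}"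

definition subset_closed :: "nat \<Rightarrow> (nat \<Rightarrow> 'a set) \<Rightarrow> bool" where
  "subset_closed M S = (\<forall>m\<in>{1..M}. \<forall>A. A \<subseteq> S m \<longrightarrow> (\<exists>m'\<in>{1..M}. S m' = A))"

text \<open>F_q^L is represented by functions nat => F_q vanishing from index L on.\<close>
definition vecs :: "nat \<Rightarrow> (nat \<Rightarrow> 'f::zero) set" where
  "vecs L = {f. \<forall>i\<ge>L. f i = 0}"

end

theory Submission
  imports Defs
begin


definition dt :: "'w pmf \<Rightarrow> ('w \<Rightarrow> 'a) \<Rightarrow> ('w \<Rightarrow> 'b) \<Rightarrow> bool" where
  "dt p X Y = (\<forall>\<omega>\<in>set_pmf p. \<forall>\<omega>'\<in>set_pmf p. Y \<omega> = Y \<omega>' \<longrightarrow> X \<omega> = X \<omega>')"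

locale esp =
  fixes b :: real and p :: "'w pmf"
  assumes b1: "1 < b" and finp: "finite (set_pmf p)"
begin

lemma prob_sum: "measure_pmf.prob p (X -` {x}) = (\<Sum>\<omega>\<in>set_pmf p. if X \<omega> = x then pmf p \<omega> else 0)"
proof -
  have "measure_pmf.prob p (X -` {x}) = measure_pmf.prob p (X -` {x} \<inter> set_pmf p)"
    by (simp add: measure_Int_set_pmf)
  also have "\<dots> = sum (pmf p) (set_pmf p \<inter> X -` {x})"
    using finp by (simp add: measure_measure_pmf_finite Int_commute)
  also have "\<dots> = (\<Sum>\<omega>\<in>set_pmf p. if X \<omega> = x then pmf p \<omega> else 0)"
    using finp by (simp add: sum.inter_restrict)
  finally show ?thesis .
qed

lemma group: "(\<Sum>x\<in>X ` set_pmf p. measure_pmf.prob p (X -` {x}) * g x)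
   = (\<Sum>\<omega>\<in>set_pmf p. pmf p \<omega> * g (X \<omega>))"
proof -
  have "(\<Sum>x\<in>X ` set_pmf p. measure_pmf.prob p (X -` {x}) * g x)
     = (\<Sum>x\<in>X ` set_pmf p. \<Sum>\<omega>\<in>set_pmf p. if X \<omega> = x then pmf p \<omega> * g x else 0)"
    by (auto simp: prob_sum sum_distrib_right intro!: sum.cong)
  also have "\<dots> = (\<Sum>\<omega>\<in>set_pmf p. \<Sum>x\<in>X ` set_pmf p. if X \<omega> = x then pmf p \<omega> * g x else 0)"
    by (rule sum.swap)
  also have "\<dots> = (\<Sum>\<omega>\<in>set_pmf p. pmf p \<omega> * g (X \<omega>))"
    using finp by (intro sum.cong) (auto simp: sum.delta)
  finally show ?thesis .
qed

lemma P_ge: "\<omega> \<in> set_pmf p \<Longrightarrow> pmf p \<omega> \<le> measure_pmf.prob p (X -` {X \<omega>})"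
  by (metis measure_pmf_single measure_pmf.finite_measure_mono sets_measure_pmf UNIV_I
      singleton_iff subsetI vimage_singleton_eq)

lemma P_pos: "\<omega> \<in> set_pmf p \<Longrightarrow> 0 < measure_pmf.prob p (X -` {X \<omega>})"
  using P_ge[of \<omega> X] pmf_positive[of \<omega> p] by linarith

lemma ent_exp: "ent b p X = - (\<Sum>\<omega>\<in>set_pmf p. pmf p \<omega> * log b (measure_pmf.prob p (X -` {X \<omega>})))"
proof -
  have "ent b p X = - (\<Sum>x\<in>X ` set_pmf p. measure_pmf.prob p (X -` {x}) * log b (measure_pmf.prob p (X -` {x})))"
    unfolding ent_def by (simp add: sum_negf)
  also have "\<dots> = - (\<Sum>\<omega>\<in>set_pmf p. pmf p \<omega> * log b (measure_pmf.prob p (X -` {X \<omega>})))"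
    by (subst group) simp
  finally show ?thesis .
qed


abbreviation Pr :: "('w \<Rightarrow> 'a) \<Rightarrow> 'w \<Rightarrow> real" where
  "Pr X \<omega> \<equiv> measure_pmf.prob p (X -` {X \<omega>})"

lemma Pr_le1: "Pr X \<omega> \<le> 1" by simp

lemma Pr_mono:
  assumes "dt p X Y" "\<omega> \<in> set_pmf p"
  shows "Pr Y \<omega> \<le> Pr X \<omega>"
  unfolding prob_sum
proof (intro sum_mono)
  fix \<omega>' assume w': "\<omega>' \<in> set_pmf p"
  have "Y \<omega>' = Y \<omega> \<Longrightarrow> X \<omega>' = X \<omega>" using assms w' unfolding dt_def by blast
  then show "(if Y \<omega>' = Y \<omega> then pmf p \<omega>' else 0) \<le> (if X \<omega>' = X \<omega> then pmf p \<omega>' else 0)"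
    by auto
qed

lemma ent_mono:
  assumes "dt p X Y" shows "ent b p X \<le> ent b p Y"
proof -
  have "(\<Sum>\<omega>\<in>set_pmf p. pmf p \<omega> * log b (Pr Y \<omega>)) \<le> (\<Sum>\<omega>\<in>set_pmf p. pmf p \<omega> * log b (Pr X \<omega>))"
  proof (intro sum_mono mult_left_mono)
    fix \<omega> assume w: "\<omega> \<in> set_pmf p"
    show "log b (Pr Y \<omega>) \<le> log b (Pr X \<omega>)"
      using Pr_mono[OF assms w] P_pos[OF w, of Y] b1 by simp
  qed simp
  then show ?thesis unfolding ent_exp by simp
qed

lemma ent_cong: "dt p X Y \<Longrightarrow> dt p Y X \<Longrightarrow> ent b p X = ent b p Y"
  using ent_mono by (meson antisym)

lemma ent_nonneg: "0 \<le> ent b p X"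
proof -
  have "(\<Sum>\<omega>\<in>set_pmf p. pmf p \<omega> * log b (Pr X \<omega>)) \<le> 0"
  proof (intro sum_nonpos mult_nonneg_nonpos)
    fix \<omega> assume w: "\<omega> \<in> set_pmf p"
    show "log b (Pr X \<omega>) \<le> 0"
      using P_pos[OF w, of X] b1 by simp
  qed simp
  then show ?thesis unfolding ent_exp by simp
qed

lemma dt_refl: "dt p X X" unfolding dt_def by blast
lemma dt_trans: "dt p X Y \<Longrightarrow> dt p Y Z \<Longrightarrow> dt p X Z" unfolding dt_def by blast
lemma dt_pair: "dt p X G \<Longrightarrow> dt p Y G \<Longrightarrow> dt p (\<lambda>\<omega>. (X \<omega>, Y \<omega>)) G" unfolding dt_def by blast
lemma dt_fst: "dt p X (\<lambda>\<omega>. (X \<omega>, Y \<omega>))" unfolding dt_def by blast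
lemma dt_snd: "dt p Y (\<lambda>\<omega>. (X \<omega>, Y \<omega>))" unfolding dt_def by blast
lemma dt_fst': "dt p X G \<Longrightarrow> dt p X (\<lambda>\<omega>. (G \<omega>, Y \<omega>))" unfolding dt_def by blast
lemma dt_snd': "dt p X G \<Longrightarrow> dt p X (\<lambda>\<omega>. (Y \<omega>, G \<omega>))" unfolding dt_def by blast
lemma dt_const: "dt p (\<lambda>_. c) G" unfolding dt_def by blast
lemma dt_fam_mem: "k \<in> A \<Longrightarrow> dt p (F k) (fam F A)"
  unfolding dt_def fam_def by (metis restrict_apply')
lemma dt_fam: "(\<And>k. k \<in> A \<Longrightarrow> dt p (F k) G) \<Longrightarrow> dt p (fam F A) G"
  unfolding dt_def fam_def by (auto intro!: restrict_ext)
lemma dt_fam_sub: "A \<subseteq> B \<Longrightarrow> dt p (fam F A) (fam F B)"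
  by (meson dt_fam dt_fam_mem subsetD)

lemma ent_pair_ge: "ent b p Y \<le> ent b p (\<lambda>\<omega>. (X \<omega>, Y \<omega>))"
  by (rule ent_mono[OF dt_snd])

lemma ent_const: "ent b p (\<lambda>_. c) = 0"
  unfolding ent_exp by simp

lemma log_le: "0 < t \<Longrightarrow> log b t \<le> (t - 1) / ln b"
proof -
  assume t: "0 < t"
  have "ln t \<le> t - 1" using ln_le_minus_one[OF t] .
  moreover have "0 < ln b" using b1 by simp
  ultimately show ?thesis unfolding log_def by (simp add: divide_right_mono)
qed

lemma cent0_dt:
  assumes e: "ent b p (\<lambda>\<omega>. (X \<omega>, Y \<omega>)) = ent b p Y"
  shows "dt p X Y"
proof -
  let ?XY = "\<lambda>\<omega>. (X \<omega>, Y \<omega>)"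
  have nn: "\<forall>\<omega>\<in>set_pmf p. 0 \<le> pmf p \<omega> * (log b (Pr Y \<omega>) - log b (Pr ?XY \<omega>))"
  proof
    fix \<omega> assume w: "\<omega> \<in> set_pmf p"
    have "log b (Pr ?XY \<omega>) \<le> log b (Pr Y \<omega>)"
      using Pr_mono[OF dt_snd w, of X Y] P_pos[OF w, of ?XY] b1 by simp
    then show "0 \<le> pmf p \<omega> * (log b (Pr Y \<omega>) - log b (Pr ?XY \<omega>))" by simp
  qed
  have "(\<Sum>\<omega>\<in>set_pmf p. pmf p \<omega> * (log b (Pr Y \<omega>) - log b (Pr ?XY \<omega>))) = ent b p ?XY - ent b p Y"
    unfolding ent_exp by (simp add: algebra_simps sum_subtractf)
  also have "\<dots> = 0" unfolding e by (rule diff_self)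
  finally have s0: "(\<Sum>\<omega>\<in>set_pmf p. pmf p \<omega> * (log b (Pr Y \<omega>) - log b (Pr ?XY \<omega>))) = 0" .
  have z: "\<forall>\<omega>\<in>set_pmf p. pmf p \<omega> * (log b (Pr Y \<omega>) - log b (Pr ?XY \<omega>)) = 0"
    using iffD1[OF sum_nonneg_eq_0_iff[OF finp] s0] nn by blast
  show ?thesis unfolding dt_def
  proof (intro ballI impI)
    fix \<omega> \<omega>' assume w: "\<omega> \<in> set_pmf p" and w': "\<omega>' \<in> set_pmf p" and yy: "Y \<omega> = Y \<omega>'"
    have "pmf p \<omega> * (log b (Pr Y \<omega>) - log b (Pr ?XY \<omega>)) = 0" using z w by blast
    then have "log b (Pr Y \<omega>) = log b (Pr ?XY \<omega>)" using pmf_positive[OF w] by simp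
    then have eq: "Pr Y \<omega> = Pr ?XY \<omega>"
      using P_pos[OF w, of Y] P_pos[OF w, of ?XY] log_inj[OF b1] unfolding inj_on_def by auto
    show "X \<omega> = X \<omega>'"
    proof (rule ccontr)
      assume ne: "X \<omega> \<noteq> X \<omega>'"
      have "Pr Y \<omega> - Pr ?XY \<omega> = (\<Sum>\<omega>''\<in>set_pmf p. if Y \<omega>'' = Y \<omega> \<and> X \<omega>'' \<noteq> X \<omega> then pmf p \<omega>'' else 0)"
        unfolding prob_sum sum_subtractf[symmetric]
      proof (intro sum.cong refl)
        fix x assume "x \<in> set_pmf p"
        show "(if Y x = Y \<omega> then pmf p x else 0) - (if (X x, Y x) = (X \<omega>, Y \<omega>) then pmf p x else 0)
           = (if Y x = Y \<omega> \<and> X x \<noteq> X \<omega> then pmf p x else 0)" by simp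
      qed
      also have "\<dots> \<ge> (if Y \<omega>' = Y \<omega> \<and> X \<omega>' \<noteq> X \<omega> then pmf p \<omega>' else 0)"
        by (rule member_le_sum[OF w' _ finp]) simp
      finally have "Pr Y \<omega> - Pr ?XY \<omega> \<ge> pmf p \<omega>'" using ne yy by simp
      then show False using eq pmf_positive[OF w'] by simp
    qed
  qed
qed


lemma marginal:
  "(\<Sum>x\<in>X ` set_pmf p. measure_pmf.prob p ((\<lambda>\<omega>. (X \<omega>, Z \<omega>)) -` {(x, z)}))
   = measure_pmf.prob p (Z -` {z})"
proof -
  have "(\<Sum>x\<in>X ` set_pmf p. measure_pmf.prob p ((\<lambda>\<omega>. (X \<omega>, Z \<omega>)) -` {(x, z)}))
     = (\<Sum>x\<in>X ` set_pmf p. \<Sum>\<omega>\<in>set_pmf p. if x = X \<omega> then (if Z \<omega> = z then pmf p \<omega> else 0) else 0)"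
    unfolding prob_sum by (intro sum.cong refl) auto
  also have "\<dots> = (\<Sum>\<omega>\<in>set_pmf p. \<Sum>x\<in>X ` set_pmf p. if x = X \<omega> then (if Z \<omega> = z then pmf p \<omega> else 0) else 0)"
    by (rule sum.swap)
  also have "\<dots> = (\<Sum>\<omega>\<in>set_pmf p. if Z \<omega> = z then pmf p \<omega> else 0)"
    using finp by (intro sum.cong refl) (simp add: sum.delta)
  finally show ?thesis unfolding prob_sum .
qed

lemma total: "(\<Sum>x\<in>X ` set_pmf p. measure_pmf.prob p (X -` {x})) = 1"
  using group[of X "\<lambda>_. 1"] sum_pmf_eq_1[OF finp order_refl] by simp

lemma submod:
  "ent b p (\<lambda>\<omega>. (X \<omega>, Y \<omega>, Z \<omega>)) + ent b p Z
   \<le> ent b p (\<lambda>\<omega>. (X \<omega>, Z \<omega>)) + ent b p (\<lambda>\<omega>. (Y \<omega>, Z \<omega>))"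
proof -
  let ?V = "\<lambda>\<omega>. (X \<omega>, Y \<omega>, Z \<omega>)"
  let ?XZ = "\<lambda>\<omega>. (X \<omega>, Z \<omega>)"
  let ?YZ = "\<lambda>\<omega>. (Y \<omega>, Z \<omega>)"
  define PV where "PV v = measure_pmf.prob p (?V -` {v})" for v
  define PXZ where "PXZ v = measure_pmf.prob p (?XZ -` {v})" for v
  define PYZ where "PYZ v = measure_pmf.prob p (?YZ -` {v})" for v
  define PZ where "PZ v = measure_pmf.prob p (Z -` {v})" for v
  define g where "g v = (case v of (x, y, z) \<Rightarrow> PXZ (x, z) * PYZ (y, z) / (PV (x, y, z) * PZ z))" for v
  define h where "h v = (case v of (x, y, z) \<Rightarrow> PXZ (x, z) * PYZ (y, z) / PZ z)" for v
  define t where "t \<omega> = g (?V \<omega>)" for \<omega>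
  have lt: "log b (t \<omega>) = log b (Pr ?XZ \<omega>) + log b (Pr ?YZ \<omega>) - log b (Pr ?V \<omega>) - log b (Pr Z \<omega>)"
    if w: "\<omega> \<in> set_pmf p" for \<omega>
    using P_pos[OF w, of ?XZ] P_pos[OF w, of ?YZ] P_pos[OF w, of ?V] P_pos[OF w, of Z]
    by (simp add: t_def g_def PXZ_def PYZ_def PV_def PZ_def log_mult log_divide)
  have D: "ent b p ?V + ent b p Z - ent b p ?XZ - ent b p ?YZ
      = (\<Sum>\<omega>\<in>set_pmf p. pmf p \<omega> * log b (t \<omega>))"
    unfolding ent_exp
    by (simp add: lt sum_subtractf sum.distrib distrib_left right_diff_distrib cong: sum.cong)
  have tpos: "0 < t \<omega>" if w: "\<omega> \<in> set_pmf p" for \<omega>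
    using P_pos[OF w, of ?XZ] P_pos[OF w, of ?YZ] P_pos[OF w, of ?V] P_pos[OF w, of Z]
    by (simp add: t_def g_def PXZ_def PYZ_def PV_def PZ_def)
  have "(\<Sum>\<omega>\<in>set_pmf p. pmf p \<omega> * log b (t \<omega>)) \<le> (\<Sum>\<omega>\<in>set_pmf p. pmf p \<omega> * ((t \<omega> - 1) / ln b))"
    by (intro sum_mono mult_left_mono log_le tpos) auto
  also have "\<dots> = ((\<Sum>\<omega>\<in>set_pmf p. pmf p \<omega> * t \<omega>) - (\<Sum>\<omega>\<in>set_pmf p. pmf p \<omega>)) / ln b"
    by (simp add: sum_divide_distrib[symmetric] sum_subtractf[symmetric] right_diff_distrib)
  also have "(\<Sum>\<omega>\<in>set_pmf p. pmf p \<omega>) = 1" using sum_pmf_eq_1[OF finp order_refl] .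
  finally have D2: "(\<Sum>\<omega>\<in>set_pmf p. pmf p \<omega> * log b (t \<omega>)) \<le> ((\<Sum>\<omega>\<in>set_pmf p. pmf p \<omega> * t \<omega>) - 1) / ln b" .
  have "(\<Sum>\<omega>\<in>set_pmf p. pmf p \<omega> * t \<omega>) = (\<Sum>v\<in>?V ` set_pmf p. PV v * g v)"
    unfolding t_def PV_def by (rule group[symmetric])
  also have "\<dots> = (\<Sum>v\<in>?V ` set_pmf p. h v)"
  proof (intro sum.cong refl)
    fix v assume "v \<in> ?V ` set_pmf p"
    then obtain \<omega> where w: "\<omega> \<in> set_pmf p" and v: "v = ?V \<omega>" by auto
    have "0 < PV v" unfolding v PV_def using P_pos[OF w, of ?V] by simp
    then show "PV v * g v = h v" unfolding g_def h_def by (auto simp: v)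
  qed
  also have "\<dots> \<le> (\<Sum>v\<in>X ` set_pmf p \<times> (Y ` set_pmf p \<times> Z ` set_pmf p). h v)"
  proof (rule sum_mono2)
    show "finite (X ` set_pmf p \<times> (Y ` set_pmf p \<times> Z ` set_pmf p))" using finp by simp
    show "?V ` set_pmf p \<subseteq> X ` set_pmf p \<times> (Y ` set_pmf p \<times> Z ` set_pmf p)" by auto
    show "0 \<le> h v" for v unfolding h_def PXZ_def PYZ_def PZ_def by (auto split: prod.split)
  qed
  also have "\<dots> = (\<Sum>x\<in>X ` set_pmf p. \<Sum>y\<in>Y ` set_pmf p. \<Sum>z\<in>Z ` set_pmf p. h (x, y, z))"
    by (simp add: sum.cartesian_product)
  also have "\<dots> = (\<Sum>z\<in>Z ` set_pmf p. \<Sum>x\<in>X ` set_pmf p. \<Sum>y\<in>Y ` set_pmf p. h (x, y, z))"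
    by (subst sum.swap) (simp add: sum.swap[of _ "Y ` set_pmf p"])
  also have "\<dots> = (\<Sum>z\<in>Z ` set_pmf p. (\<Sum>x\<in>X ` set_pmf p. PXZ (x, z)) * (\<Sum>y\<in>Y ` set_pmf p. PYZ (y, z)) / PZ z)"
    unfolding h_def by (simp add: sum_product sum_divide_distrib)
  also have "\<dots> = (\<Sum>z\<in>Z ` set_pmf p. PZ z)"
  proof (intro sum.cong refl)
    fix z assume "z \<in> Z ` set_pmf p"
    then obtain \<omega> where w: "\<omega> \<in> set_pmf p" and v: "z = Z \<omega>" by auto
    have "0 < PZ z" unfolding v PZ_def using P_pos[OF w, of Z] by simp
    moreover have "(\<Sum>x\<in>X ` set_pmf p. PXZ (x, z)) = PZ z" unfolding PXZ_def PZ_def by (rule marginal)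
    moreover have "(\<Sum>y\<in>Y ` set_pmf p. PYZ (y, z)) = PZ z" unfolding PYZ_def PZ_def by (rule marginal)
    ultimately show "(\<Sum>x\<in>X ` set_pmf p. PXZ (x, z)) * (\<Sum>y\<in>Y ` set_pmf p. PYZ (y, z)) / PZ z = PZ z"
      by simp
  qed
  also have "\<dots> = 1" unfolding PZ_def by (rule total)
  finally have "(\<Sum>\<omega>\<in>set_pmf p. pmf p \<omega> * t \<omega>) \<le> 1" .
  then have "((\<Sum>\<omega>\<in>set_pmf p. pmf p \<omega> * t \<omega>) - 1) / ln b \<le> 0"
    using b1 by (simp add: divide_nonpos_pos)
  with D D2 show ?thesis by linarith
qed


end


context esp
begin
lemma ent_cong_pair_unit: "ent b p (\<lambda>\<omega>. (X \<omega>, ())) = ent b p X"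
  by (rule ent_cong[OF dt_pair[OF dt_refl dt_const] dt_fst])

lemma subadd: "ent b p (\<lambda>\<omega>. (X \<omega>, Y \<omega>)) \<le> ent b p X + ent b p Y"
proof -
  have "ent b p (\<lambda>\<omega>. (X \<omega>, Y \<omega>, ())) + ent b p (\<lambda>_. ())
     \<le> ent b p (\<lambda>\<omega>. (X \<omega>, ())) + ent b p (\<lambda>\<omega>. (Y \<omega>, ()))"
    by (rule submod)
  moreover have "ent b p (\<lambda>\<omega>. (X \<omega>, Y \<omega>, ())) = ent b p (\<lambda>\<omega>. (X \<omega>, Y \<omega>))"
    by (rule ent_cong[OF dt_pair[OF dt_fst dt_pair[OF dt_snd dt_const]] dt_pair[OF dt_fst dt_snd'[OF dt_fst]]])
  ultimately show ?thesis by (simp add: ent_cong_pair_unit ent_const)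
qed

lemma cond_reduce:
  assumes "dt p G R"
  shows "ent b p (\<lambda>\<omega>. (X \<omega>, R \<omega>)) - ent b p R \<le> ent b p (\<lambda>\<omega>. (X \<omega>, G \<omega>)) - ent b p G"
proof -
  have "ent b p (\<lambda>\<omega>. (X \<omega>, R \<omega>, G \<omega>)) + ent b p G
     \<le> ent b p (\<lambda>\<omega>. (X \<omega>, G \<omega>)) + ent b p (\<lambda>\<omega>. (R \<omega>, G \<omega>))"
    by (rule submod)
  moreover have "ent b p (\<lambda>\<omega>. (R \<omega>, G \<omega>)) = ent b p R"
    by (rule ent_cong[OF dt_pair[OF dt_refl assms] dt_fst])
  moreover have "ent b p (\<lambda>\<omega>. (X \<omega>, R \<omega>, G \<omega>)) = ent b p (\<lambda>\<omega>. (X \<omega>, R \<omega>))"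
    by (rule ent_cong[OF dt_pair[OF dt_fst dt_pair[OF dt_snd dt_snd'[OF assms]]] dt_pair[OF dt_fst dt_snd'[OF dt_fst]]])
  ultimately show ?thesis by linarith
qed

lemma ent_le_card:
  assumes F: "finite F" and XF: "\<forall>\<omega>\<in>set_pmf p. X \<omega> \<in> F"
  shows "ent b p X \<le> log b (card F)"
proof -
  obtain \<omega>0 where w0: "\<omega>0 \<in> set_pmf p" using set_pmf_not_empty[of p] by blast
  have cF: "0 < real (card F)" using F XF w0 card_gt_0_iff by fastforce
  have lt: "- log b (Pr X \<omega>) - log b (card F) = log b (1 / (Pr X \<omega> * card F))"
    if w: "\<omega> \<in> set_pmf p" for \<omega>
    using P_pos[OF w, of X] cF by (simp add: log_mult log_divide)
  have "ent b p X - log b (card F) = (\<Sum>\<omega>\<in>set_pmf p. pmf p \<omega> * (- log b (Pr X \<omega>) - log b (card F)))"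
    unfolding ent_exp using sum_pmf_eq_1[OF finp order_refl]
    by (simp add: right_diff_distrib sum_subtractf sum_negf sum_distrib_right[symmetric])
  also have "\<dots> = (\<Sum>\<omega>\<in>set_pmf p. pmf p \<omega> * log b (1 / (Pr X \<omega> * card F)))"
    by (intro sum.cong refl) (simp add: lt)
  also have "\<dots> \<le> (\<Sum>\<omega>\<in>set_pmf p. pmf p \<omega> * ((1 / (Pr X \<omega> * card F) - 1) / ln b))"
  proof (intro sum_mono mult_left_mono log_le)
    fix \<omega> assume w: "\<omega> \<in> set_pmf p"
    show "0 < 1 / (Pr X \<omega> * real (card F))" using P_pos[OF w, of X] cF by simp
  qed simp
  also have "\<dots> = ((\<Sum>\<omega>\<in>set_pmf p. pmf p \<omega> * (1 / (Pr X \<omega> * card F))) - (\<Sum>\<omega>\<in>set_pmf p. pmf p \<omega>)) / ln b"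
    by (simp add: sum_divide_distrib[symmetric] sum_subtractf[symmetric] right_diff_distrib)
  also have "(\<Sum>\<omega>\<in>set_pmf p. pmf p \<omega>) = 1" using sum_pmf_eq_1[OF finp order_refl] .
  also have "(\<Sum>\<omega>\<in>set_pmf p. pmf p \<omega> * (1 / (Pr X \<omega> * card F)))
      = (\<Sum>x\<in>X ` set_pmf p. measure_pmf.prob p (X -` {x}) * (1 / (measure_pmf.prob p (X -` {x}) * card F)))"
    by (rule group[symmetric])
  also have "\<dots> = (\<Sum>x\<in>X ` set_pmf p. 1 / card F)"
  proof (intro sum.cong refl)
    fix x assume "x \<in> X ` set_pmf p"
    then obtain \<omega> where w: "\<omega> \<in> set_pmf p" and v: "x = X \<omega>" by auto
    show "measure_pmf.prob p (X -` {x}) * (1 / (measure_pmf.prob p (X -` {x}) * card F)) = 1 / card F"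
      using P_pos[OF w, of X] v by simp
  qed
  also have "\<dots> = card (X ` set_pmf p) / card F" by simp
  also have "\<dots> \<le> 1"
  proof -
    have "card (X ` set_pmf p) \<le> card F" using XF F by (intro card_mono) auto
    then show ?thesis using cF by simp
  qed
  finally have "ent b p X - log b (card F) \<le> (1 - 1) / ln b"
    using b1 by (simp add: divide_right_mono)
  then show ?thesis by simp
qed

lemma ent_unif:
  assumes F: "finite F" and Fne: "F \<noteq> {}" and u: "\<forall>f\<in>F. measure_pmf.prob p (X -` {f}) = 1 / real (card F)"
  shows "ent b p X = log b (card F) \<and> (\<forall>\<omega>\<in>set_pmf p. X \<omega> \<in> F)"
proof -
  obtain \<omega>0 where w0: "\<omega>0 \<in> set_pmf p" using set_pmf_not_empty[of p] by blast
  have cF: "0 < card F" using F Fne by (simp add: card_gt_0_iff)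
  have "(\<Sum>f\<in>F. measure_pmf.prob p (X -` {f})) = 1" using u cF by simp
  also have "(\<Sum>f\<in>F. measure_pmf.prob p (X -` {f}))
      = (\<Sum>\<omega>\<in>set_pmf p. if X \<omega> \<in> F then pmf p \<omega> else 0)"
  proof -
    have "(\<Sum>f\<in>F. measure_pmf.prob p (X -` {f}))
        = (\<Sum>f\<in>F. \<Sum>\<omega>\<in>set_pmf p. if f = X \<omega> then pmf p \<omega> else 0)"
      unfolding prob_sum by (intro sum.cong refl) auto
    also have "\<dots> = (\<Sum>\<omega>\<in>set_pmf p. \<Sum>f\<in>F. if f = X \<omega> then pmf p \<omega> else 0)"
      by (rule sum.swap)
    also have "\<dots> = (\<Sum>\<omega>\<in>set_pmf p. if X \<omega> \<in> F then pmf p \<omega> else 0)"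
      using F by (intro sum.cong refl) (simp add: sum.delta)
    finally show ?thesis .
  qed
  finally have s1: "(\<Sum>\<omega>\<in>set_pmf p. if X \<omega> \<in> F then pmf p \<omega> else 0) = 1" .
  have "(\<Sum>\<omega>\<in>set_pmf p. if X \<omega> \<in> F then 0 else pmf p \<omega>)
      = (\<Sum>\<omega>\<in>set_pmf p. pmf p \<omega> - (if X \<omega> \<in> F then pmf p \<omega> else 0))"
    by (intro sum.cong refl) auto
  also have "\<dots> = 0" using s1 sum_pmf_eq_1[OF finp order_refl] by (simp add: sum_subtractf)
  finally have s2: "(\<Sum>\<omega>\<in>set_pmf p. if X \<omega> \<in> F then 0 else pmf p \<omega>) = 0" .
  have XF: "X \<omega> \<in> F" if w: "\<omega> \<in> set_pmf p" for \<omega>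
  proof (rule ccontr)
    assume n: "X \<omega> \<notin> F"
    have "(if X \<omega> \<in> F then 0 else pmf p \<omega>) \<le> (\<Sum>\<omega>\<in>set_pmf p. if X \<omega> \<in> F then 0 else pmf p \<omega>)"
      by (rule member_le_sum[OF w _ finp]) simp
    then show False using n s2 pmf_positive[OF w] by simp
  qed
  have "ent b p X = - (\<Sum>\<omega>\<in>set_pmf p. pmf p \<omega> * log b (1 / real (card F)))"
    unfolding ent_exp using XF u by (intro arg_cong[where f=uminus] sum.cong refl) auto
  also have "\<dots> = log b (card F)"
    using sum_pmf_eq_1[OF finp order_refl] cF b1
    by (simp add: sum_negf sum_distrib_right[symmetric] log_divide)
  finally show ?thesis using XF by blast
qed


lemma dtI: "(\<And>\<omega> \<omega>'. \<omega> \<in> set_pmf p \<Longrightarrow> \<omega>' \<in> set_pmf p \<Longrightarrow> Y \<omega> = Y \<omega>' \<Longrightarrow> X \<omega> = X \<omega>') \<Longrightarrow> dt p X Y"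
  unfolding dt_def by blast

lemma dtD: "dt p X Y \<Longrightarrow> \<omega> \<in> set_pmf p \<Longrightarrow> \<omega>' \<in> set_pmf p \<Longrightarrow> Y \<omega> = Y \<omega>' \<Longrightarrow> X \<omega> = X \<omega>'"
  unfolding dt_def by blast

lemma cmi_nonneg: "0 \<le> cmi b p X Y Z"
  unfolding cmi_def using submod[of X Y Z] by linarith

lemma cmi_sym: "cmi b p X Y Z = cmi b p Y X Z"
proof -
  have "ent b p (\<lambda>\<omega>. (X \<omega>, Y \<omega>, Z \<omega>)) = ent b p (\<lambda>\<omega>. (Y \<omega>, X \<omega>, Z \<omega>))"
    by (rule ent_cong; rule dtI; simp)
  then show ?thesis unfolding cmi_def by linarith
qed

lemma cmi_mono1:
  assumes "dt p X' X"
  shows "cmi b p X' Y Z \<le> cmi b p X Y Z"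
proof -
  have sm: "ent b p (\<lambda>\<omega>. (X \<omega>, Y \<omega>, (X' \<omega>, Z \<omega>))) + ent b p (\<lambda>\<omega>. (X' \<omega>, Z \<omega>))
     \<le> ent b p (\<lambda>\<omega>. (X \<omega>, (X' \<omega>, Z \<omega>))) + ent b p (\<lambda>\<omega>. (Y \<omega>, (X' \<omega>, Z \<omega>)))"
    by (rule submod)
  have e1: "ent b p (\<lambda>\<omega>. (X \<omega>, Y \<omega>, (X' \<omega>, Z \<omega>))) = ent b p (\<lambda>\<omega>. (X \<omega>, Y \<omega>, Z \<omega>))"
    by (rule ent_cong; rule dtI) (auto intro: dtD[OF assms])
  have e2: "ent b p (\<lambda>\<omega>. (X \<omega>, (X' \<omega>, Z \<omega>))) = ent b p (\<lambda>\<omega>. (X \<omega>, Z \<omega>))"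
    by (rule ent_cong; rule dtI) (auto intro: dtD[OF assms])
  have e3: "ent b p (\<lambda>\<omega>. (Y \<omega>, (X' \<omega>, Z \<omega>))) = ent b p (\<lambda>\<omega>. (X' \<omega>, Y \<omega>, Z \<omega>))"
    by (rule ent_cong; rule dtI) auto
  show ?thesis using sm e1 e2 e3 unfolding cmi_def by linarith
qed

lemma cmi_mono:
  assumes "dt p X' X" "dt p Y' Y"
  shows "cmi b p X' Y' Z \<le> cmi b p X Y Z"
  using cmi_mono1[OF assms(1), of Y' Z] cmi_mono1[OF assms(2), of X Z] cmi_sym[of X Y' Z] cmi_sym[of X Y Z]
  by linarith

lemma cmi_cong3:
  assumes "dt p Z Z'" "dt p Z' Z"
  shows "cmi b p X Y Z = cmi b p X Y Z'"
proof -
  have "ent b p (\<lambda>\<omega>. (X \<omega>, Z \<omega>)) = ent b p (\<lambda>\<omega>. (X \<omega>, Z' \<omega>))"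
    by (rule ent_cong; rule dtI) (auto intro: dtD[OF assms(1)] dtD[OF assms(2)])
  moreover have "ent b p (\<lambda>\<omega>. (Y \<omega>, Z \<omega>)) = ent b p (\<lambda>\<omega>. (Y \<omega>, Z' \<omega>))"
    by (rule ent_cong; rule dtI) (auto intro: dtD[OF assms(1)] dtD[OF assms(2)])
  moreover have "ent b p (\<lambda>\<omega>. (X \<omega>, Y \<omega>, Z \<omega>)) = ent b p (\<lambda>\<omega>. (X \<omega>, Y \<omega>, Z' \<omega>))"
    by (rule ent_cong; rule dtI) (auto intro: dtD[OF assms(1)] dtD[OF assms(2)])
  moreover have "ent b p Z = ent b p Z'" by (rule ent_cong[OF assms])
  ultimately show ?thesis unfolding cmi_def by simp
qed

lemma indep_sub:
  assumes i: "ent b p (\<lambda>\<omega>. (s \<omega>, G \<omega>)) = ent b p s + ent b p G" and d: "dt p G' G"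
  shows "ent b p (\<lambda>\<omega>. (s \<omega>, G' \<omega>)) = ent b p s + ent b p G'"
  using cond_reduce[OF d, of s] subadd[of s G'] i by linarith

lemma cmi_drop:
  assumes i: "ent b p (\<lambda>\<omega>. (s \<omega>, (Y \<omega>, W \<omega>, C \<omega>))) = ent b p s + ent b p (\<lambda>\<omega>. (Y \<omega>, W \<omega>, C \<omega>))"
  shows "cmi b p Y W (\<lambda>\<omega>. (s \<omega>, C \<omega>)) = cmi b p Y W C"
proof -
  let ?G = "\<lambda>\<omega>. (Y \<omega>, W \<omega>, C \<omega>)"
  have a1: "ent b p (\<lambda>\<omega>. (Y \<omega>, (s \<omega>, C \<omega>))) = ent b p s + ent b p (\<lambda>\<omega>. (Y \<omega>, C \<omega>))"
  proof -
    have "ent b p (\<lambda>\<omega>. (Y \<omega>, (s \<omega>, C \<omega>))) = ent b p (\<lambda>\<omega>. (s \<omega>, (Y \<omega>, C \<omega>)))"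
      by (rule ent_cong; rule dtI) auto
    also have "\<dots> = ent b p s + ent b p (\<lambda>\<omega>. (Y \<omega>, C \<omega>))"
      by (rule indep_sub[OF i]) (rule dtI; auto)
    finally show ?thesis .
  qed
  have a2: "ent b p (\<lambda>\<omega>. (W \<omega>, (s \<omega>, C \<omega>))) = ent b p s + ent b p (\<lambda>\<omega>. (W \<omega>, C \<omega>))"
  proof -
    have "ent b p (\<lambda>\<omega>. (W \<omega>, (s \<omega>, C \<omega>))) = ent b p (\<lambda>\<omega>. (s \<omega>, (W \<omega>, C \<omega>)))"
      by (rule ent_cong; rule dtI) auto
    also have "\<dots> = ent b p s + ent b p (\<lambda>\<omega>. (W \<omega>, C \<omega>))"
      by (rule indep_sub[OF i]) (rule dtI; auto)
    finally show ?thesis .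
  qed
  have a3: "ent b p (\<lambda>\<omega>. (Y \<omega>, W \<omega>, (s \<omega>, C \<omega>))) = ent b p s + ent b p ?G"
  proof -
    have "ent b p (\<lambda>\<omega>. (Y \<omega>, W \<omega>, (s \<omega>, C \<omega>))) = ent b p (\<lambda>\<omega>. (s \<omega>, ?G \<omega>))"
      by (rule ent_cong; rule dtI) auto
    then show ?thesis using i by simp
  qed
  have a4: "ent b p (\<lambda>\<omega>. (s \<omega>, C \<omega>)) = ent b p s + ent b p C"
    by (rule indep_sub[OF i]) (rule dtI; auto)
  show ?thesis unfolding cmi_def using a1 a2 a3 a4 by linarith
qed

end


lemma fam_eq_iff: "fam F A \<omega> = fam F A \<omega>' \<longleftrightarrow> (\<forall>k\<in>A. F k \<omega> = F k \<omega>')"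
proof
  assume h: "fam F A \<omega> = fam F A \<omega>'"
  show "\<forall>k\<in>A. F k \<omega> = F k \<omega>'"
  proof
    fix k assume k: "k \<in> A"
    have "fam F A \<omega> k = fam F A \<omega>' k" using h by simp
    then show "F k \<omega> = F k \<omega>'" using k unfolding fam_def by simp
  qed
next
  assume "\<forall>k\<in>A. F k \<omega> = F k \<omega>'"
  then show "fam F A \<omega> = fam F A \<omega>'" unfolding fam_def by (intro restrict_ext) simp
qed

lemma Kset_u_fin: "finite (Kset_u V u)"
proof (rule finite_subset[of _ "{u} \<times> {1..V u}"])
  show "Kset_u V u \<subseteq> {u} \<times> {1..V u}" unfolding Kset_u_def by blast
qed simp

lemma Kset_fin: "finite (Kset U V)"
  unfolding Kset_def by (intro finite_UN_I finite_atLeastAtMost Kset_u_fin)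

lemma Kset_u_sub: "u \<in> {1..U} \<Longrightarrow> Kset_u V u \<subseteq> Kset U V"
  unfolding Kset_def by blast

lemma Kset_u_fst: "k \<in> Kset_u V u \<Longrightarrow> fst k = u"
  unfolding Kset_u_def by force

lemma Kset_u_disj: "u \<noteq> u' \<Longrightarrow> Kset_u V u \<inter> Kset_u V u' = {}"
  using Kset_u_fst by blast

locale hsa = esp b p for b :: real and p :: "'w pmf" +
  fixes U :: nat and V :: "nat \<Rightarrow> nat" and L :: nat
    and W :: "nat \<times> nat \<Rightarrow> 'w \<Rightarrow> (nat \<Rightarrow> 'f::{field,finite})"
    and Z :: "nat \<times> nat \<Rightarrow> 'w \<Rightarrow> 'z" and X :: "nat \<times> nat \<Rightarrow> 'w \<Rightarrow> 'x"
    and Y :: "nat \<Rightarrow> 'w \<Rightarrow> 'y"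
  assumes hX: "\<forall>k\<in>Kset U V. dt p (X k) (\<lambda>\<omega>. (W k \<omega>, Z k \<omega>))"
    and hY: "\<forall>u\<in>{1..U}. dt p (Y u) (fam X (Kset_u V u))"
    and hS: "dt p (\<lambda>\<omega> i. \<Sum>k\<in>Kset U V. W k \<omega> i) (fam Y {1..U})"
    and hI: "ent b p (\<lambda>\<omega>. (fam W (Kset U V) \<omega>, fam Z (Kset U V) \<omega>))
              = (\<Sum>k\<in>Kset U V. ent b p (W k)) + ent b p (fam Z (Kset U V))"
    and hW: "\<forall>k\<in>Kset U V. ent b p (W k) = real L"
    and hV: "\<forall>k\<in>Kset U V. \<forall>\<omega>\<in>set_pmf p. W k \<omega> \<in> vecs L"
    and hC: "real (card (vecs L :: (nat \<Rightarrow> 'f) set)) = b ^ L"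
    and hF: "finite (vecs L :: (nat \<Rightarrow> 'f) set)"
begin

abbreviation "K \<equiv> Kset U V"
abbreviation "sumW \<equiv> (\<lambda>\<omega> i. \<Sum>k\<in>Kset U V. W k \<omega> i)"
definition "WZC C = (\<lambda>\<omega>. (fam W C \<omega>, fam Z C \<omega>))"
definition "RC C = WZC (K - C)"

lemma WZC_eq: "WZC C \<omega> = WZC C \<omega>' \<longleftrightarrow> (\<forall>k\<in>C. W k \<omega> = W k \<omega>' \<and> Z k \<omega> = Z k \<omega>')"
  unfolding WZC_def by (auto simp: fam_eq_iff)

lemma PX: "k \<in> K \<Longrightarrow> \<omega> \<in> set_pmf p \<Longrightarrow> \<omega>' \<in> set_pmf p \<Longrightarrow> W k \<omega> = W k \<omega>' \<Longrightarrow> Z k \<omega> = Z k \<omega>'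
  \<Longrightarrow> X k \<omega> = X k \<omega>'"
  using dtD[of "X k" "\<lambda>\<omega>. (W k \<omega>, Z k \<omega>)" \<omega> \<omega>'] hX by auto

lemma PYX: "u \<in> {1..U} \<Longrightarrow> \<omega> \<in> set_pmf p \<Longrightarrow> \<omega>' \<in> set_pmf p
  \<Longrightarrow> (\<forall>k\<in>Kset_u V u. X k \<omega> = X k \<omega>') \<Longrightarrow> Y u \<omega> = Y u \<omega>'"
  using dtD[of "Y u" "fam X (Kset_u V u)" \<omega> \<omega>'] hY by (auto simp: fam_eq_iff)

lemma PY: "u \<in> {1..U} \<Longrightarrow> \<omega> \<in> set_pmf p \<Longrightarrow> \<omega>' \<in> set_pmf p
  \<Longrightarrow> (\<forall>k\<in>Kset_u V u. W k \<omega> = W k \<omega>' \<and> Z k \<omega> = Z k \<omega>') \<Longrightarrow> Y u \<omega> = Y u \<omega>'"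
  by (rule PYX) (use PX Kset_u_sub in blast)+

lemma PS: "\<omega> \<in> set_pmf p \<Longrightarrow> \<omega>' \<in> set_pmf p \<Longrightarrow> (\<forall>u\<in>{1..U}. Y u \<omega> = Y u \<omega>')
  \<Longrightarrow> sumW \<omega> = sumW \<omega>'"
  using dtD[OF hS, of \<omega> \<omega>'] by (auto simp: fam_eq_iff)

lemma PA:
  assumes a: "a \<in> K" and s: "sumW \<omega> = sumW \<omega>'" and o: "\<forall>k\<in>K - {a}. W k \<omega> = W k \<omega>'"
  shows "W a \<omega> = W a \<omega>'"
proof
  fix i
  have "sumW \<omega> i = W a \<omega> i + (\<Sum>k\<in>K - {a}. W k \<omega> i)"
    using a Kset_fin by (simp add: sum.remove)
  moreover have "sumW \<omega>' i = W a \<omega>' i + (\<Sum>k\<in>K - {a}. W k \<omega>' i)"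
    using a Kset_fin by (simp add: sum.remove)
  moreover have "(\<Sum>k\<in>K - {a}. W k \<omega> i) = (\<Sum>k\<in>K - {a}. W k \<omega>' i)"
    using o by simp
  ultimately show "W a \<omega> i = W a \<omega>' i" using s by (metis add_right_cancel)
qed

lemma fam_ins: "ent b p (fam F (insert a A)) = ent b p (\<lambda>\<omega>. (F a \<omega>, fam F A \<omega>))"
  by (rule ent_cong; rule dtI) (auto simp: fam_eq_iff)

lemma fam_subadd: "finite B \<Longrightarrow> ent b p (fam F B) \<le> (\<Sum>k\<in>B. ent b p (F k))"
proof (induction B rule: finite_induct)
  case empty
  have "ent b p (fam F {}) = ent b p (\<lambda>_. ())"
    by (rule ent_cong; rule dtI) (auto simp: fam_eq_iff)
  then have "ent b p (fam F {}) = 0" by (simp add: ent_const)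
  then show ?case by simp
next
  case (insert a A)
  then show ?case using fam_ins[of F a A] subadd[of "F a" "fam F A"] by simp
qed

lemma Indep:
  assumes B: "B \<subseteq> K" and G: "dt p G (\<lambda>\<omega>. (fam W (K - B) \<omega>, fam Z K \<omega>))"
  shows "ent b p (\<lambda>\<omega>. (fam W B \<omega>, G \<omega>)) = ent b p (fam W B) + ent b p G"
    and "ent b p (fam W B) = (\<Sum>k\<in>B. ent b p (W k))"
proof -
  let ?R = "\<lambda>\<omega>. (fam W (K - B) \<omega>, fam Z K \<omega>)"
  have h1: "ent b p (\<lambda>\<omega>. (fam W K \<omega>, fam Z K \<omega>)) = ent b p (\<lambda>\<omega>. (fam W B \<omega>, ?R \<omega>))"
    by (rule ent_cong; rule dtI) (use B in \<open>auto simp: fam_eq_iff\<close>)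
  have h2: "ent b p (\<lambda>\<omega>. (fam W B \<omega>, ?R \<omega>)) \<le> ent b p (fam W B) + ent b p ?R" by (rule subadd)
  have h3: "ent b p ?R \<le> ent b p (fam W (K - B)) + ent b p (fam Z K)" by (rule subadd)
  have fB: "finite B" using B Kset_fin finite_subset by blast
  have h4: "ent b p (fam W B) \<le> (\<Sum>k\<in>B. ent b p (W k))" by (rule fam_subadd[OF fB])
  have h5: "ent b p (fam W (K - B)) \<le> (\<Sum>k\<in>K - B. ent b p (W k))" by (rule fam_subadd) (simp add: Kset_fin)
  have h6: "(\<Sum>k\<in>K. ent b p (W k)) = (\<Sum>k\<in>B. ent b p (W k)) + (\<Sum>k\<in>K - B. ent b p (W k))"
    using B Kset_fin by (metis add.commute sum.subset_diff)
  show e: "ent b p (fam W B) = (\<Sum>k\<in>B. ent b p (W k))"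
    using h1 h2 h3 h4 h5 h6 hI by linarith
  have i: "ent b p (\<lambda>\<omega>. (fam W B \<omega>, ?R \<omega>)) = ent b p (fam W B) + ent b p ?R"
    using h1 h2 h3 h4 h5 h6 hI by linarith
  show "ent b p (\<lambda>\<omega>. (fam W B \<omega>, G \<omega>)) = ent b p (fam W B) + ent b p G"
    using cond_reduce[OF G, of "fam W B"] subadd[of "fam W B" G] i by linarith
qed

lemma Indep1:
  assumes a: "a \<in> K" and G: "dt p G (\<lambda>\<omega>. (fam W (K - {a}) \<omega>, fam Z K \<omega>))"
  shows "ent b p (\<lambda>\<omega>. (W a \<omega>, G \<omega>)) = real L + ent b p G"
proof -
  have "ent b p (\<lambda>\<omega>. (W a \<omega>, G \<omega>)) = ent b p (\<lambda>\<omega>. (fam W {a} \<omega>, G \<omega>))"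
    by (rule ent_cong; rule dtI) (auto simp: fam_eq_iff)
  also have "\<dots> = ent b p (fam W {a}) + ent b p G" using Indep(1)[of "{a}" G] a G by simp
  also have "ent b p (fam W {a}) = real L" using Indep(2)[of "{a}" G] a G hW by simp
  finally show ?thesis .
qed


lemma LXa:
  assumes a: "a \<in> K"
  shows "real L \<le> ent b p (\<lambda>\<omega>. (X a \<omega>, RC {a} \<omega>)) - ent b p (RC {a})"
proof -
  let ?R = "RC {a}"
  have e1: "ent b p (\<lambda>\<omega>. (W a \<omega>, ?R \<omega>)) = real L + ent b p ?R"
    by (rule Indep1[OF a]; rule dtI) (auto simp: RC_def WZC_def fam_eq_iff)
  have e2: "ent b p (\<lambda>\<omega>. (W a \<omega>, X a \<omega>, ?R \<omega>)) = ent b p (\<lambda>\<omega>. (X a \<omega>, ?R \<omega>))"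
  proof (rule ent_cong; rule dtI)
    fix \<omega> \<omega>' assume w: "\<omega> \<in> set_pmf p" "\<omega>' \<in> set_pmf p"
      and h: "(X a \<omega>, ?R \<omega>) = (X a \<omega>', ?R \<omega>')"
    have xa: "X a \<omega> = X a \<omega>'" using h by simp
    have r: "\<forall>k\<in>K-{a}. W k \<omega> = W k \<omega>' \<and> Z k \<omega> = Z k \<omega>'"
      using h by (simp add: RC_def WZC_eq)
    have xk: "\<forall>k\<in>K. X k \<omega> = X k \<omega>'"
    proof
      fix k assume k: "k \<in> K"
      show "X k \<omega> = X k \<omega>'"
      proof (cases "k = a")
        case True then show ?thesis using xa by simp
      next
        case False then show ?thesis using r k PX[OF k w] by blast
      qed
    qed
    have yu: "\<forall>u\<in>{1..U}. Y u \<omega> = Y u \<omega>'"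
    proof
      fix u assume u: "u \<in> {1..U}"
      show "Y u \<omega> = Y u \<omega>'" using PYX[OF u w] xk Kset_u_sub[OF u] by blast
    qed
    have "sumW \<omega> = sumW \<omega>'" using PS[OF w yu] .
    then have "W a \<omega> = W a \<omega>'" using PA[OF a] r by blast
    then show "(W a \<omega>, X a \<omega>, ?R \<omega>) = (W a \<omega>', X a \<omega>', ?R \<omega>')" using h by simp
  next
    fix \<omega> \<omega>' assume "(W a \<omega>, X a \<omega>, ?R \<omega>) = (W a \<omega>', X a \<omega>', ?R \<omega>')"
    then show "(X a \<omega>, ?R \<omega>) = (X a \<omega>', ?R \<omega>')" by simp
  qed
  have e3: "ent b p (\<lambda>\<omega>. (W a \<omega>, ?R \<omega>)) \<le> ent b p (\<lambda>\<omega>. (W a \<omega>, X a \<omega>, ?R \<omega>))"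
    by (rule ent_mono; rule dtI) simp
  show ?thesis using e1 e2 e3 by linarith
qed

lemma LX:
  assumes "finite A"
  shows "A \<subseteq> K \<Longrightarrow> real (card A) * real L \<le> ent b p (\<lambda>\<omega>. (fam X A \<omega>, RC A \<omega>)) - ent b p (RC A)"
  using assms
proof (induction A rule: finite_induct)
  case empty
  then show ?case using ent_pair_ge[of "RC {}" "fam X {}"] by simp
next
  case (insert a A)
  let ?Rn = "RC (insert a A)"
  have a: "a \<in> K" and A: "A \<subseteq> K" using insert.prems by auto
  have IH: "real (card A) * real L \<le> ent b p (\<lambda>\<omega>. (fam X A \<omega>, RC A \<omega>)) - ent b p (RC A)"
    using insert.IH A by simp
  have s1: "ent b p (\<lambda>\<omega>. (fam X (insert a A) \<omega>, ?Rn \<omega>)) = ent b p (\<lambda>\<omega>. (X a \<omega>, fam X A \<omega>, ?Rn \<omega>))"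
    by (rule ent_cong; rule dtI) (auto simp: fam_eq_iff)
  have d2: "dt p (\<lambda>\<omega>. (fam X A \<omega>, ?Rn \<omega>)) (RC {a})"
  proof (rule dtI)
    fix \<omega> \<omega>' assume w: "\<omega> \<in> set_pmf p" "\<omega>' \<in> set_pmf p" and h: "RC {a} \<omega> = RC {a} \<omega>'"
    have r: "\<forall>k\<in>K-{a}. W k \<omega> = W k \<omega>' \<and> Z k \<omega> = Z k \<omega>'"
      using h by (simp add: RC_def WZC_eq)
    have "\<forall>k\<in>A. X k \<omega> = X k \<omega>'"
    proof
      fix k assume k: "k \<in> A"
      then have "k \<in> K - {a}" using A insert.hyps(2) by auto
      then show "X k \<omega> = X k \<omega>'" using r PX[OF _ w] by blast
    qed
    moreover have "?Rn \<omega> = ?Rn \<omega>'" using r by (auto simp: RC_def WZC_eq)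
    ultimately show "(fam X A \<omega>, ?Rn \<omega>) = (fam X A \<omega>', ?Rn \<omega>')" by (simp add: fam_eq_iff)
  qed
  have s2: "ent b p (\<lambda>\<omega>. (X a \<omega>, RC {a} \<omega>)) - ent b p (RC {a})
      \<le> ent b p (\<lambda>\<omega>. (X a \<omega>, fam X A \<omega>, ?Rn \<omega>)) - ent b p (\<lambda>\<omega>. (fam X A \<omega>, ?Rn \<omega>))"
    by (rule cond_reduce[OF d2])
  have d3: "dt p ?Rn (RC A)"
    by (rule dtI) (auto simp: RC_def WZC_eq)
  have s3: "ent b p (\<lambda>\<omega>. (fam X A \<omega>, RC A \<omega>)) - ent b p (RC A)
      \<le> ent b p (\<lambda>\<omega>. (fam X A \<omega>, ?Rn \<omega>)) - ent b p ?Rn"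
    by (rule cond_reduce[OF d3])
  have c: "real (card (insert a A)) = real (card A) + 1" using insert.hyps by simp
  show ?case using s1 s2 s3 IH LXa[OF a] c by (simp add: algebra_simps)
qed

lemma ZW:
  assumes A: "A \<subseteq> K" and T: "T \<subseteq> K"
  shows "ent b p (\<lambda>\<omega>. (fam Z A \<omega>, fam W A \<omega>, WZC T \<omega>)) - ent b p (\<lambda>\<omega>. (fam W A \<omega>, WZC T \<omega>))
       = ent b p (\<lambda>\<omega>. (fam Z A \<omega>, fam Z T \<omega>)) - ent b p (fam Z T)"
proof -
  have B: "A \<union> T \<subseteq> K" using A T by auto
  have c1: "ent b p (\<lambda>\<omega>. (fam Z A \<omega>, fam W A \<omega>, WZC T \<omega>))
      = ent b p (\<lambda>\<omega>. (fam W (A \<union> T) \<omega>, (fam Z A \<omega>, fam Z T \<omega>)))"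
    by (rule ent_cong; rule dtI) (auto simp: WZC_def fam_eq_iff)
  have c2: "ent b p (\<lambda>\<omega>. (fam W (A \<union> T) \<omega>, (fam Z A \<omega>, fam Z T \<omega>)))
      = ent b p (fam W (A \<union> T)) + ent b p (\<lambda>\<omega>. (fam Z A \<omega>, fam Z T \<omega>))"
    by (rule Indep(1)[OF B]; rule dtI) (use A T in \<open>auto simp: fam_eq_iff\<close>)
  have c3: "ent b p (\<lambda>\<omega>. (fam W A \<omega>, WZC T \<omega>)) = ent b p (\<lambda>\<omega>. (fam W (A \<union> T) \<omega>, fam Z T \<omega>))"
    by (rule ent_cong; rule dtI) (auto simp: WZC_def fam_eq_iff)
  have c4: "ent b p (\<lambda>\<omega>. (fam W (A \<union> T) \<omega>, fam Z T \<omega>)) = ent b p (fam W (A \<union> T)) + ent b p (fam Z T)"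
    by (rule Indep(1)[OF B]; rule dtI) (use A T in \<open>auto simp: fam_eq_iff\<close>)
  show ?thesis using c1 c2 c3 c4 by linarith
qed

lemma partA:
  assumes S: "S \<subseteq> K" and T: "T \<subseteq> K" and ST: "S \<inter> T = {}" and u: "u \<in> {1..U}"
    and c7: "cmi b p (fam X (Kset_u V u)) (fam W S) (fam (\<lambda>k \<omega>. (W k \<omega>, Z k \<omega>)) T) = 0"
  shows "real (card (S \<inter> Kset_u V u)) * real L
     \<le> ent b p (\<lambda>\<omega>. (fam Z (S \<inter> Kset_u V u) \<omega>, fam Z T \<omega>)) - ent b p (fam Z T)"
proof -
  define A where "A = S \<inter> Kset_u V u"
  have AK: "A \<subseteq> K" using S A_def by auto
  have fA: "finite A" using AK Kset_fin finite_subset by blast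
  let ?C = "WZC T"
  have m: "cmi b p (fam X A) (fam W A) (fam (\<lambda>k \<omega>. (W k \<omega>, Z k \<omega>)) T)
      \<le> cmi b p (fam X (Kset_u V u)) (fam W S) (fam (\<lambda>k \<omega>. (W k \<omega>, Z k \<omega>)) T)"
    by (rule cmi_mono; rule dt_fam_sub) (auto simp: A_def)
  have cg: "cmi b p (fam X A) (fam W A) (fam (\<lambda>k \<omega>. (W k \<omega>, Z k \<omega>)) T) = cmi b p (fam X A) (fam W A) ?C"
    by (rule cmi_cong3; rule dtI) (auto simp: WZC_def fam_eq_iff)
  have s1: "cmi b p (fam X A) (fam W A) ?C = 0"
    using m cg c7 cmi_nonneg[of "fam X A" "fam W A" ?C] by linarith
  have TA: "T \<subseteq> K - A" using ST T A_def by auto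
  have d: "dt p ?C (RC A)"
    by (rule dtI) (use TA in \<open>auto simp: RC_def WZC_eq\<close>)
  have s2: "real (card A) * real L \<le> ent b p (\<lambda>\<omega>. (fam X A \<omega>, ?C \<omega>)) - ent b p ?C"
    using LX[OF fA AK] cond_reduce[OF d, of "fam X A"] by linarith
  have s4: "ent b p (\<lambda>\<omega>. (fam X A \<omega>, fam W A \<omega>, ?C \<omega>)) \<le> ent b p (\<lambda>\<omega>. (fam Z A \<omega>, fam W A \<omega>, ?C \<omega>))"
  proof (rule ent_mono; rule dtI)
    fix \<omega> \<omega>' assume w: "\<omega> \<in> set_pmf p" "\<omega>' \<in> set_pmf p"
      and h: "(fam Z A \<omega>, fam W A \<omega>, ?C \<omega>) = (fam Z A \<omega>', fam W A \<omega>', ?C \<omega>')"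
    have "\<forall>k\<in>A. X k \<omega> = X k \<omega>'"
    proof
      fix k assume k: "k \<in> A"
      have "W k \<omega> = W k \<omega>'" "Z k \<omega> = Z k \<omega>'" using h k by (auto simp: fam_eq_iff)
      then show "X k \<omega> = X k \<omega>'" using PX[OF _ w] k AK by blast
    qed
    then show "(fam X A \<omega>, fam W A \<omega>, ?C \<omega>) = (fam X A \<omega>', fam W A \<omega>', ?C \<omega>')"
      using h by (simp add: fam_eq_iff)
  qed
  note s5 = ZW[OF AK T]
  show ?thesis using s1 s2 s4 s5 unfolding cmi_def A_def[symmetric] by linarith
qed

lemma LYu:
  assumes u: "u \<in> {1..U}" and a: "a \<in> S \<inter> Kset_u V u"
  shows "real L \<le> ent b p (\<lambda>\<omega>. (Y u \<omega>, RC (S \<inter> Kset_u V u) \<omega>)) - ent b p (RC (S \<inter> Kset_u V u))"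
proof -
  define Bu where "Bu = S \<inter> Kset_u V u"
  have aK: "a \<in> K" using a Kset_u_sub[OF u] by auto
  have aB: "a \<in> Bu" using a Bu_def by simp
  let ?R = "\<lambda>\<omega>. (fam W (K - {a}) \<omega>, fam Z (K - Bu) \<omega>)"
  have d0: "dt p (RC Bu) ?R"
    by (rule dtI) (use aB in \<open>auto simp: RC_def WZC_eq fam_eq_iff\<close>)
  have s0: "ent b p (\<lambda>\<omega>. (Y u \<omega>, ?R \<omega>)) - ent b p ?R \<le> ent b p (\<lambda>\<omega>. (Y u \<omega>, RC Bu \<omega>)) - ent b p (RC Bu)"
    by (rule cond_reduce[OF d0])
  have e1: "ent b p (\<lambda>\<omega>. (W a \<omega>, ?R \<omega>)) = real L + ent b p ?R"
    by (rule Indep1[OF aK]; rule dtI) (auto simp: fam_eq_iff)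
  have e2: "ent b p (\<lambda>\<omega>. (W a \<omega>, Y u \<omega>, ?R \<omega>)) = ent b p (\<lambda>\<omega>. (Y u \<omega>, ?R \<omega>))"
  proof (rule ent_cong; rule dtI)
    fix \<omega> \<omega>' assume w: "\<omega> \<in> set_pmf p" "\<omega>' \<in> set_pmf p"
      and h: "(Y u \<omega>, ?R \<omega>) = (Y u \<omega>', ?R \<omega>')"
    have r1: "\<forall>k\<in>K-{a}. W k \<omega> = W k \<omega>'" using h by (simp add: fam_eq_iff)
    have r2: "\<forall>k\<in>K-Bu. Z k \<omega> = Z k \<omega>'" using h by (simp add: fam_eq_iff)
    have yu: "\<forall>u'\<in>{1..U}. Y u' \<omega> = Y u' \<omega>'"
    proof
      fix u' assume u': "u' \<in> {1..U}"
      show "Y u' \<omega> = Y u' \<omega>'"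
      proof (cases "u' = u")
        case True then show ?thesis using h by simp
      next
        case False
        have "\<forall>k\<in>Kset_u V u'. W k \<omega> = W k \<omega>' \<and> Z k \<omega> = Z k \<omega>'"
        proof
          fix k assume k: "k \<in> Kset_u V u'"
          have kK: "k \<in> K" using k Kset_u_sub[OF u'] by auto
          have "k \<notin> Kset_u V u" using k Kset_u_disj[OF False] by auto
          then have "k \<noteq> a" "k \<notin> Bu" using a Bu_def by auto
          then show "W k \<omega> = W k \<omega>' \<and> Z k \<omega> = Z k \<omega>'" using r1 r2 kK by auto
        qed
        then show ?thesis using PY[OF u' w] by blast
      qed
    qed
    have "sumW \<omega> = sumW \<omega>'" using PS[OF w yu] .
    then have "W a \<omega> = W a \<omega>'" using PA[OF aK] r1 by blast
    then show "(W a \<omega>, Y u \<omega>, ?R \<omega>) = (W a \<omega>', Y u \<omega>', ?R \<omega>')" using h by simp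
  next
    fix \<omega> \<omega>' assume "(W a \<omega>, Y u \<omega>, ?R \<omega>) = (W a \<omega>', Y u \<omega>', ?R \<omega>')"
    then show "(Y u \<omega>, ?R \<omega>) = (Y u \<omega>', ?R \<omega>')" by simp
  qed
  have e3: "ent b p (\<lambda>\<omega>. (W a \<omega>, ?R \<omega>)) \<le> ent b p (\<lambda>\<omega>. (W a \<omega>, Y u \<omega>, ?R \<omega>))"
    by (rule ent_mono; rule dtI) simp
  show ?thesis using s0 e1 e2 e3 unfolding Bu_def by linarith
qed

lemma LY:
  assumes "finite U2"
  shows "U2 \<subseteq> Uset U V S T \<Longrightarrow> real (card U2) * real L
     \<le> ent b p (\<lambda>\<omega>. (fam Y U2 \<omega>, RC (KsetU V U2 \<inter> S) \<omega>)) - ent b p (RC (KsetU V U2 \<inter> S))"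
  using assms
proof (induction U2 rule: finite_induct)
  case empty
  then show ?case using ent_pair_ge[of "RC (KsetU V {} \<inter> S)" "fam Y {}"] by simp
next
  case (insert u U2)
  let ?Bn = "KsetU V (insert u U2) \<inter> S"
  let ?B2 = "KsetU V U2 \<inter> S"
  let ?Bu = "S \<inter> Kset_u V u"
  have uU: "u \<in> Uset U V S T" and U2s: "U2 \<subseteq> Uset U V S T" using insert.prems by auto
  have u: "u \<in> {1..U}" and ne: "S \<inter> Kset_u V u \<noteq> {}" using uU by (auto simp: Uset_def)
  obtain a where a: "a \<in> S \<inter> Kset_u V u" using ne by blast
  have IH: "real (card U2) * real L \<le> ent b p (\<lambda>\<omega>. (fam Y U2 \<omega>, RC ?B2 \<omega>)) - ent b p (RC ?B2)"
    using insert.IH U2s by simp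
  have s1: "ent b p (\<lambda>\<omega>. (fam Y (insert u U2) \<omega>, RC ?Bn \<omega>)) = ent b p (\<lambda>\<omega>. (Y u \<omega>, fam Y U2 \<omega>, RC ?Bn \<omega>))"
    by (rule ent_cong; rule dtI) (auto simp: fam_eq_iff)
  have d2: "dt p (\<lambda>\<omega>. (fam Y U2 \<omega>, RC ?Bn \<omega>)) (RC ?Bu)"
  proof (rule dtI)
    fix \<omega> \<omega>' assume w: "\<omega> \<in> set_pmf p" "\<omega>' \<in> set_pmf p" and h: "RC ?Bu \<omega> = RC ?Bu \<omega>'"
    have r: "\<forall>k\<in>K - ?Bu. W k \<omega> = W k \<omega>' \<and> Z k \<omega> = Z k \<omega>'"
      using h by (simp add: RC_def WZC_eq)
    have "\<forall>u'\<in>U2. Y u' \<omega> = Y u' \<omega>'"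
    proof
      fix u' assume u'2: "u' \<in> U2"
      have u': "u' \<in> {1..U}" using u'2 U2s by (auto simp: Uset_def)
      have neq: "u' \<noteq> u" using u'2 insert.hyps(2) by auto
      have "\<forall>k\<in>Kset_u V u'. W k \<omega> = W k \<omega>' \<and> Z k \<omega> = Z k \<omega>'"
      proof
        fix k assume k: "k \<in> Kset_u V u'"
        have kK: "k \<in> K" using k Kset_u_sub[OF u'] by auto
        have "k \<notin> Kset_u V u" using k Kset_u_disj[OF neq] by auto
        then show "W k \<omega> = W k \<omega>' \<and> Z k \<omega> = Z k \<omega>'" using r kK by auto
      qed
      then show "Y u' \<omega> = Y u' \<omega>'" using PY[OF u' w] by blast
    qed
    moreover have "RC ?Bn \<omega> = RC ?Bn \<omega>'"
    proof -
      have "K - ?Bn \<subseteq> K - ?Bu" by (auto simp: KsetU_def)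
      then show ?thesis using r by (auto simp: RC_def WZC_eq)
    qed
    ultimately show "(fam Y U2 \<omega>, RC ?Bn \<omega>) = (fam Y U2 \<omega>', RC ?Bn \<omega>')" by (simp add: fam_eq_iff)
  qed
  have s2: "ent b p (\<lambda>\<omega>. (Y u \<omega>, RC ?Bu \<omega>)) - ent b p (RC ?Bu)
      \<le> ent b p (\<lambda>\<omega>. (Y u \<omega>, fam Y U2 \<omega>, RC ?Bn \<omega>)) - ent b p (\<lambda>\<omega>. (fam Y U2 \<omega>, RC ?Bn \<omega>))"
    by (rule cond_reduce[OF d2])
  have d3: "dt p (RC ?Bn) (RC ?B2)"
  proof -
    have "K - ?Bn \<subseteq> K - ?B2" by (auto simp: KsetU_def)
    then show ?thesis by (intro dtI) (auto simp: RC_def WZC_eq)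
  qed
  have s3: "ent b p (\<lambda>\<omega>. (fam Y U2 \<omega>, RC ?B2 \<omega>)) - ent b p (RC ?B2)
      \<le> ent b p (\<lambda>\<omega>. (fam Y U2 \<omega>, RC ?Bn \<omega>)) - ent b p (RC ?Bn)"
    by (rule cond_reduce[OF d3])
  have c: "real (card (insert u U2)) = real (card U2) + 1" using insert.hyps by simp
  show ?case using s1 s2 s3 IH LYu[OF u a] c by (simp add: algebra_simps)
qed

lemma sum_vecs: "\<omega> \<in> set_pmf p \<Longrightarrow> sumW \<omega> \<in> vecs L"
  using hV unfolding vecs_def by simp

lemma ent_sumW: "ent b p sumW \<le> real L"
proof -
  have "ent b p sumW \<le> log b (card (vecs L :: (nat \<Rightarrow> 'f) set))"
    by (rule ent_le_card[OF hF]) (use sum_vecs in blast)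
  also have "\<dots> = real L" using hC b1 by (simp add: log_nat_power)
  finally show ?thesis .
qed

lemma sum_indep:
  assumes k0: "k0 \<in> K" and G: "dt p G (\<lambda>\<omega>. (fam W (K - {k0}) \<omega>, fam Z K \<omega>))"
  shows "ent b p (\<lambda>\<omega>. (sumW \<omega>, G \<omega>)) = ent b p sumW + ent b p G"
proof -
  let ?R = "\<lambda>\<omega>. (fam W (K - {k0}) \<omega>, fam Z K \<omega>)"
  have s1: "ent b p (\<lambda>\<omega>. (sumW \<omega>, ?R \<omega>)) - ent b p ?R \<le> ent b p (\<lambda>\<omega>. (sumW \<omega>, G \<omega>)) - ent b p G"
    by (rule cond_reduce[OF G])
  have s2: "ent b p (\<lambda>\<omega>. (sumW \<omega>, ?R \<omega>)) = ent b p (\<lambda>\<omega>. (W k0 \<omega>, ?R \<omega>))"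
  proof (rule ent_cong; rule dtI)
    fix \<omega> \<omega>' assume w: "\<omega> \<in> set_pmf p" "\<omega>' \<in> set_pmf p"
      and h: "(W k0 \<omega>, ?R \<omega>) = (W k0 \<omega>', ?R \<omega>')"
    have "\<forall>k\<in>K. W k \<omega> = W k \<omega>'"
    proof
      fix k assume "k \<in> K"
      then show "W k \<omega> = W k \<omega>'" using h by (cases "k = k0") (auto simp: fam_eq_iff)
    qed
    then have "sumW \<omega> = sumW \<omega>'" by (auto intro!: sum.cong)
    then show "(sumW \<omega>, ?R \<omega>) = (sumW \<omega>', ?R \<omega>')" using h by simp
  next
    fix \<omega> \<omega>' assume w: "\<omega> \<in> set_pmf p" "\<omega>' \<in> set_pmf p"
      and h: "(sumW \<omega>, ?R \<omega>) = (sumW \<omega>', ?R \<omega>')"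
    have "\<forall>k\<in>K - {k0}. W k \<omega> = W k \<omega>'" using h by (simp add: fam_eq_iff)
    moreover have "sumW \<omega> = sumW \<omega>'" using h by simp
    ultimately have "W k0 \<omega> = W k0 \<omega>'" using PA[OF k0] by blast
    then show "(W k0 \<omega>, ?R \<omega>) = (W k0 \<omega>', ?R \<omega>')" using h by simp
  qed
  have s3: "ent b p (\<lambda>\<omega>. (W k0 \<omega>, ?R \<omega>)) = real L + ent b p ?R"
    by (rule Indep1[OF k0 dt_refl])
  show ?thesis using s1 s2 s3 ent_sumW subadd[of sumW G] by linarith
qed

lemma coreB:
  assumes S: "S \<subseteq> K" and T: "T \<subseteq> K" and ST: "S \<inter> T = {}"
    and U2: "U2 \<subseteq> Uset U V S T" and k0: "k0 \<in> K" "k0 \<notin> KsetU V U2" "k0 \<notin> T"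
    and c6: "cmi b p (fam Y {1..U}) (fam W S) (\<lambda>\<omega>. (sumW \<omega>, fam (\<lambda>k \<omega>. (W k \<omega>, Z k \<omega>)) T \<omega>)) = 0"
  shows "real (card U2) * real L
     \<le> ent b p (\<lambda>\<omega>. (fam Z (KsetU V (Uset U V S T)) \<omega>, fam Z T \<omega>)) - ent b p (fam Z T)"
proof -
  define B where "B = KsetU V U2 \<inter> S"
  have BK: "B \<subseteq> K" using S B_def by auto
  have U2U: "U2 \<subseteq> {1..U}" using U2 by (auto simp: Uset_def)
  have fU2: "finite U2" using U2U finite_subset by blast
  let ?C = "WZC T"
  have TB: "T \<subseteq> K - B" using ST T B_def by auto
  have d: "dt p ?C (RC B)"
    by (rule dtI) (use TB in \<open>auto simp: RC_def WZC_eq\<close>)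
  have b1: "real (card U2) * real L \<le> ent b p (\<lambda>\<omega>. (fam Y U2 \<omega>, ?C \<omega>)) - ent b p ?C"
    using LY[OF fU2 U2] cond_reduce[OF d, of "fam Y U2"] unfolding B_def by linarith
  have m: "cmi b p (fam Y U2) (fam W B) (\<lambda>\<omega>. (sumW \<omega>, fam (\<lambda>k \<omega>. (W k \<omega>, Z k \<omega>)) T \<omega>))
     \<le> cmi b p (fam Y {1..U}) (fam W S) (\<lambda>\<omega>. (sumW \<omega>, fam (\<lambda>k \<omega>. (W k \<omega>, Z k \<omega>)) T \<omega>))"
    by (rule cmi_mono; rule dt_fam_sub) (use U2U B_def in auto)
  have cg: "cmi b p (fam Y U2) (fam W B) (\<lambda>\<omega>. (sumW \<omega>, fam (\<lambda>k \<omega>. (W k \<omega>, Z k \<omega>)) T \<omega>))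
     = cmi b p (fam Y U2) (fam W B) (\<lambda>\<omega>. (sumW \<omega>, ?C \<omega>))"
    by (rule cmi_cong3; rule dtI) (auto simp: WZC_def fam_eq_iff)
  have b2: "cmi b p (fam Y U2) (fam W B) (\<lambda>\<omega>. (sumW \<omega>, ?C \<omega>)) = 0"
    using m cg c6 cmi_nonneg[of "fam Y U2" "fam W B" "\<lambda>\<omega>. (sumW \<omega>, ?C \<omega>)"] by linarith
  have dG: "dt p (\<lambda>\<omega>. (fam Y U2 \<omega>, fam W B \<omega>, ?C \<omega>)) (\<lambda>\<omega>. (fam W (K - {k0}) \<omega>, fam Z K \<omega>))"
  proof (rule dtI)
    fix \<omega> \<omega>' assume w: "\<omega> \<in> set_pmf p" "\<omega>' \<in> set_pmf p"
      and h: "(fam W (K - {k0}) \<omega>, fam Z K \<omega>) = (fam W (K - {k0}) \<omega>', fam Z K \<omega>')"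
    have r1: "\<forall>k\<in>K-{k0}. W k \<omega> = W k \<omega>'" and r2: "\<forall>k\<in>K. Z k \<omega> = Z k \<omega>'"
      using h by (auto simp: fam_eq_iff)
    have "\<forall>u\<in>U2. Y u \<omega> = Y u \<omega>'"
    proof
      fix u assume uu: "u \<in> U2"
      have u: "u \<in> {1..U}" using uu U2U by auto
      have "\<forall>k\<in>Kset_u V u. W k \<omega> = W k \<omega>' \<and> Z k \<omega> = Z k \<omega>'"
      proof
        fix k assume k: "k \<in> Kset_u V u"
        have kK: "k \<in> K" using k Kset_u_sub[OF u] by auto
        have "k \<noteq> k0" using k uu k0(2) by (auto simp: KsetU_def)
        then show "W k \<omega> = W k \<omega>' \<and> Z k \<omega> = Z k \<omega>'" using r1 r2 kK by auto
      qed
      then show "Y u \<omega> = Y u \<omega>'" using PY[OF u w] by blast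
    qed
    moreover have "\<forall>k\<in>B. W k \<omega> = W k \<omega>'" using r1 BK k0(2) B_def by auto
    moreover have "?C \<omega> = ?C \<omega>'" using r1 r2 T k0(3) by (auto simp: WZC_eq)
    ultimately show "(fam Y U2 \<omega>, fam W B \<omega>, ?C \<omega>) = (fam Y U2 \<omega>', fam W B \<omega>', ?C \<omega>')"
      by (simp add: fam_eq_iff)
  qed
  have b2': "cmi b p (fam Y U2) (fam W B) ?C = 0"
    using cmi_drop[OF sum_indep[OF k0(1) dG]] b2 by simp
  have b4: "ent b p (\<lambda>\<omega>. (fam Y U2 \<omega>, fam W B \<omega>, ?C \<omega>)) \<le> ent b p (\<lambda>\<omega>. (fam Z B \<omega>, fam W B \<omega>, ?C \<omega>))"
  proof (rule ent_mono; rule dtI)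
    fix \<omega> \<omega>' assume w: "\<omega> \<in> set_pmf p" "\<omega>' \<in> set_pmf p"
      and h: "(fam Z B \<omega>, fam W B \<omega>, ?C \<omega>) = (fam Z B \<omega>', fam W B \<omega>', ?C \<omega>')"
    have r: "\<forall>k\<in>B \<union> T. W k \<omega> = W k \<omega>' \<and> Z k \<omega> = Z k \<omega>'"
      using h by (auto simp: fam_eq_iff WZC_eq)
    have "\<forall>u\<in>U2. Y u \<omega> = Y u \<omega>'"
    proof
      fix u assume uu: "u \<in> U2"
      have u: "u \<in> {1..U}" using uu U2U by auto
      have "Kset_u V u \<subseteq> S \<union> T" using uu U2 by (auto simp: Uset_def)
      moreover have "Kset_u V u \<subseteq> KsetU V U2" using uu by (auto simp: KsetU_def)
      ultimately have "Kset_u V u \<subseteq> B \<union> T" using B_def by auto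
      then show "Y u \<omega> = Y u \<omega>'" using PY[OF u w] r by blast
    qed
    then show "(fam Y U2 \<omega>, fam W B \<omega>, ?C \<omega>) = (fam Y U2 \<omega>', fam W B \<omega>', ?C \<omega>')"
      using h by (simp add: fam_eq_iff)
  qed
  note b5 = ZW[OF BK T]
  have b6: "ent b p (\<lambda>\<omega>. (fam Z B \<omega>, fam Z T \<omega>))
      \<le> ent b p (\<lambda>\<omega>. (fam Z (KsetU V (Uset U V S T)) \<omega>, fam Z T \<omega>))"
  proof (rule ent_mono; rule dtI)
    have "B \<subseteq> KsetU V (Uset U V S T)" using U2 B_def by (auto simp: KsetU_def)
    then show "(fam Z B \<omega>, fam Z T \<omega>) = (fam Z B \<omega>', fam Z T \<omega>')"
      if "(fam Z (KsetU V (Uset U V S T)) \<omega>, fam Z T \<omega>) = (fam Z (KsetU V (Uset U V S T)) \<omega>', fam Z T \<omega>')"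
      for \<omega> \<omega>' using that by (auto simp: fam_eq_iff)
  qed
  show ?thesis using b1 b2' b4 b5 b6 unfolding cmi_def by linarith
qed

lemma partB:
  assumes S: "S \<subseteq> K" and T: "T \<subseteq> K" and ST: "S \<inter> T = {}"
    and c6: "cmi b p (fam Y {1..U}) (fam W S) (\<lambda>\<omega>. (sumW \<omega>, fam (\<lambda>k \<omega>. (W k \<omega>, Z k \<omega>)) T \<omega>)) = 0"
  shows "ent b p (\<lambda>\<omega>. (fam Z (KsetU V (Uset U V S T)) \<omega>, fam Z T \<omega>)) - ent b p (fam Z T)
     \<ge> (if card (KsetU V (Uset U V S T) \<union> T) = card K
        then (real (card (Uset U V S T)) - 1) * real L
        else real (card (Uset U V S T)) * real L)"
proof -
  let ?UU = "Uset U V S T"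
  let ?KU = "KsetU V ?UU"
  have UUU: "?UU \<subseteq> {1..U}" by (auto simp: Uset_def)
  have fUU: "finite ?UU" using UUU finite_subset by blast
  have KUK: "?KU \<subseteq> K"
  proof
    fix k assume "k \<in> ?KU"
    then obtain u where u: "u \<in> ?UU" and k: "k \<in> Kset_u V u" by (auto simp: KsetU_def)
    then have "u \<in> {1..U}" using UUU by blast
    then show "k \<in> K" using Kset_u_sub k by blast
  qed
  have nn: "0 \<le> ent b p (\<lambda>\<omega>. (fam Z ?KU \<omega>, fam Z T \<omega>)) - ent b p (fam Z T)"
    using ent_pair_ge[of "fam Z T" "fam Z ?KU"] by simp
  show ?thesis
  proof (cases "card (?KU \<union> T) = card K")
    case True
    show ?thesis
    proof (cases "?UU = {}")
      case True
      then show ?thesis using nn by simp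
    next
      case False
      then obtain u0 where u0: "u0 \<in> ?UU" by blast
      have "S \<inter> Kset_u V u0 \<noteq> {}" using u0 by (simp add: Uset_def)
      then obtain k0 where k0: "k0 \<in> S \<inter> Kset_u V u0" by blast
      have k0K: "k0 \<in> K" using k0 S by auto
      have k0n: "k0 \<notin> KsetU V (?UU - {u0})"
      proof
        assume "k0 \<in> KsetU V (?UU - {u0})"
        then obtain u where u: "u \<in> ?UU - {u0}" and k: "k0 \<in> Kset_u V u" by (auto simp: KsetU_def)
        have "fst k0 = u" using Kset_u_fst[OF k] .
        moreover have "fst k0 = u0" using k0 Kset_u_fst by blast
        ultimately show False using u by blast
      qed
      have k0T: "k0 \<notin> T" using k0 ST by auto
      have "real (card (?UU - {u0})) * real L
         \<le> ent b p (\<lambda>\<omega>. (fam Z ?KU \<omega>, fam Z T \<omega>)) - ent b p (fam Z T)"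
        by (rule coreB[OF S T ST _ k0K k0n k0T c6]) blast
      moreover have "real (card (?UU - {u0})) = real (card ?UU) - 1"
        proof -
        have "card ?UU = Suc (card (?UU - {u0}))" by (rule card.remove[OF fUU u0])
        then have "real (card ?UU) = real (card (?UU - {u0})) + 1" by (simp only: of_nat_Suc)
        then show ?thesis by linarith
      qed
      ultimately show ?thesis using True by simp
    qed
  next
    case False
    have "?KU \<union> T \<noteq> K" using False by auto
    then obtain k0 where k0: "k0 \<in> K" "k0 \<notin> ?KU \<union> T" using KUK T by blast
    have "real (card ?UU) * real L \<le> ent b p (\<lambda>\<omega>. (fam Z ?KU \<omega>, fam Z T \<omega>)) - ent b p (fam Z T)"
      by (rule coreB[OF S T ST order_refl k0(1) _ _ c6]) (use k0 in blast)+
    then show ?thesis using False by simp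
  qed
qed
end


lemma vecs_card:
  "finite (vecs L :: (nat \<Rightarrow> 'f::{zero,finite}) set) \<and> card (vecs L :: (nat \<Rightarrow> 'f) set) = CARD('f) ^ L"
proof -
  let ?P = "PiE {..<L} (\<lambda>_. (UNIV :: 'f set))"
  have bij: "bij_betw (\<lambda>f. restrict f {..<L}) (vecs L :: (nat \<Rightarrow> 'f) set) ?P"
  proof (rule bij_betw_imageI)
    show "inj_on (\<lambda>f. restrict f {..<L}) (vecs L :: (nat \<Rightarrow> 'f) set)"
    proof (rule inj_onI)
      fix f g :: "nat \<Rightarrow> 'f"
      assume f: "f \<in> vecs L" and g: "g \<in> vecs L" and e: "restrict f {..<L} = restrict g {..<L}"
      show "f = g"
      proof (rule ext)
        fix i
        show "f i = g i"
        proof (cases "i < L")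
          case True
          then show ?thesis using fun_cong[OF e, of i] by simp
        next
          case False
          then show ?thesis using f g by (simp add: vecs_def)
        qed
      qed
    qed
    show "(\<lambda>f. restrict f {..<L}) ` (vecs L :: (nat \<Rightarrow> 'f) set) = ?P"
    proof
      show "(\<lambda>f. restrict f {..<L}) ` (vecs L :: (nat \<Rightarrow> 'f) set) \<subseteq> ?P"
        by (rule image_subsetI) (simp add: Pi_def)
      show "?P \<subseteq> (\<lambda>f. restrict f {..<L}) ` (vecs L :: (nat \<Rightarrow> 'f) set)"
      proof
        fix g assume g: "g \<in> ?P"
        let ?f = "\<lambda>i. if i < L then g i else 0"
        have fv: "?f \<in> (vecs L :: (nat \<Rightarrow> 'f) set)" by (simp add: vecs_def)
        have rg: "restrict ?f {..<L} = g"
        proof -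
          have "restrict ?f {..<L} = restrict g {..<L}" by (intro restrict_ext) simp
          also have "\<dots> = g" using g by (simp add: PiE_restrict)
          finally show ?thesis .
        qed
        show "g \<in> (\<lambda>f. restrict f {..<L}) ` (vecs L :: (nat \<Rightarrow> 'f) set)"
          by (rule image_eqI[where x="?f" and f="\<lambda>f. restrict f {..<L}", OF rg[symmetric] fv])
      qed
    qed
  qed
  have fP: "finite ?P" by (simp add: finite_PiE)
  have cP: "card ?P = CARD('f) ^ L" by (simp add: card_PiE)
  have fV: "finite (vecs L :: (nat \<Rightarrow> 'f) set)" using bij_betw_finite[OF bij] fP by simp
  have "card (vecs L :: (nat \<Rightarrow> 'f) set) = card ?P" by (rule bij_betw_same_card[OF bij])
  then show ?thesis using fV cP by simp
qed

lemma card_field_ge2: "2 \<le> CARD('f::{field,finite})"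
proof -
  have "card {0::'f, 1} = 2" by simp
  moreover have "card {0::'f, 1} \<le> CARD('f)" by (rule card_mono) auto
  ultimately show ?thesis by simp
qed

theorem lemma3:
  fixes U M N L :: nat and V :: "nat \<Rightarrow> nat"
    and S T :: "nat \<Rightarrow> (nat \<times> nat) set"
    and p :: "'w pmf"
    and W :: "nat \<times> nat \<Rightarrow> 'w \<Rightarrow> (nat \<Rightarrow> 'f::{field,finite})"
    and ZS :: "'w \<Rightarrow> 's"
    and Z :: "nat \<times> nat \<Rightarrow> 'w \<Rightarrow> 'z"
    and X :: "nat \<times> nat \<Rightarrow> 'w \<Rightarrow> 'x"
    and Y :: "nat \<Rightarrow> 'w \<Rightarrow> 'y"
    and u m n :: nat
  defines "q \<equiv> real CARD('f)"
    and "K \<equiv> Kset U V"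
    and "sumW \<equiv> (\<lambda>\<omega> i. \<Sum>k\<in>Kset U V. W k \<omega> i)"
    and "WZ \<equiv> (\<lambda>k \<omega>. (W k \<omega>, Z k \<omega>))"
  assumes U2: "U \<ge> 2"
    and V1: "\<forall>u\<in>{1..U}. V u \<ge> 1"
    and S_sub: "\<forall>m\<in>{1..M}. S m \<subseteq> K" and S_closed: "subset_closed M S"
    and T_sub: "\<forall>n\<in>{1..N}. T n \<subseteq> K" and T_closed: "subset_closed N T"
    and fin: "finite (set_pmf p)"
    and unif: "\<forall>k\<in>K. \<forall>f\<in>vecs L. measure_pmf.prob p (W k -` {f}) = 1 / q ^ L"
    and c1: "ent q p (\<lambda>\<omega>. (fam W K \<omega>, fam Z K \<omega>))
              = (\<Sum>k\<in>K. ent q p (W k)) + ent q p (fam Z K)"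
    and c2: "cent q p (fam Z K) ZS = 0"
    and c3: "\<forall>k\<in>K. cent q p (X k) (WZ k) = 0"
    and c4: "\<forall>u\<in>{1..U}. cent q p (Y u) (fam X (Kset_u V u)) = 0"
    and c5: "cent q p sumW (fam Y {1..U}) = 0"
    and c6: "\<forall>m\<in>{1..M}. \<forall>n\<in>{1..N}.
              cmi q p (fam Y {1..U}) (fam W (S m)) (\<lambda>\<omega>. (sumW \<omega>, fam WZ (T n) \<omega>)) = 0"
    and c7: "\<forall>u\<in>{1..U}. \<forall>m\<in>{1..M}. \<forall>n\<in>{1..N}.
              cmi q p (fam X (Kset_u V u)) (fam W (S m)) (fam WZ (T n)) = 0"
    and u: "u \<in> {1..U}" and m: "m \<in> {1..M}" and n: "n \<in> {1..N}"
    and disj: "S m \<inter> T n = {}"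
    and small: "card ((S m \<inter> Kset_u V u) \<union> T n) \<le> card K - 1"
  shows "cent q p (fam Z (S m \<inter> Kset_u V u)) (fam Z (T n))
           \<ge> real (card (S m \<inter> Kset_u V u)) * real L
         \<and> cent q p (fam Z (KsetU V (Uset U V (S m) (T n)))) (fam Z (T n))
           \<ge> (if card (KsetU V (Uset U V (S m) (T n)) \<union> T n) = card K
              then (real (card (Uset U V (S m) (T n))) - 1) * real L
              else real (card (Uset U V (S m) (T n))) * real L)"
proof -
  have q1: "1 < q" unfolding q_def using card_field_ge2[where 'f='f] by simp
  interpret E: esp q p using q1 fin by (rule esp.intro)
  have vc: "finite (vecs L :: (nat \<Rightarrow> 'f) set)" "real (card (vecs L :: (nat \<Rightarrow> 'f) set)) = q ^ L"
    using vecs_card[where 'f='f and L=L] unfolding q_def by (auto simp: of_nat_power)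
  have vne: "(vecs L :: (nat \<Rightarrow> 'f) set) \<noteq> {}"
  proof -
    have "(\<lambda>_. 0) \<in> (vecs L :: (nat \<Rightarrow> 'f) set)" by (simp add: vecs_def)
    then show ?thesis by blast
  qed
  have WU: "ent q p (W k) = real L \<and> (\<forall>\<omega>\<in>set_pmf p. W k \<omega> \<in> vecs L)" if k: "k \<in> K" for k
  proof -
    have "ent q p (W k) = log q (card (vecs L :: (nat \<Rightarrow> 'f) set)) \<and> (\<forall>\<omega>\<in>set_pmf p. W k \<omega> \<in> vecs L)"
      by (rule E.ent_unif[OF vc(1) vne]) (use unif k vc(2) in auto)
    moreover have "log q (card (vecs L :: (nat \<Rightarrow> 'f) set)) = real L"
      using vc(2) q1 by (simp add: log_nat_power)
    ultimately show ?thesis by simp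
  qed
  have I: "hsa q p U V L W Z X Y"
  proof (intro hsa.intro hsa_axioms.intro)
    show "esp q p" using q1 fin by (rule esp.intro)
    show "\<forall>k\<in>Kset U V. dt p (X k) (\<lambda>\<omega>. (W k \<omega>, Z k \<omega>))"
      using c3 unfolding K_def WZ_def cent_def by (auto intro: E.cent0_dt)
    show "\<forall>u\<in>{1..U}. dt p (Y u) (fam X (Kset_u V u))"
      using c4 unfolding cent_def by (auto intro: E.cent0_dt)
    show "dt p (\<lambda>\<omega> i. \<Sum>k\<in>Kset U V. W k \<omega> i) (fam Y {1..U})"
      using c5 unfolding sumW_def cent_def by (auto intro: E.cent0_dt)
    show "ent q p (\<lambda>\<omega>. (fam W (Kset U V) \<omega>, fam Z (Kset U V) \<omega>))
              = (\<Sum>k\<in>Kset U V. ent q p (W k)) + ent q p (fam Z (Kset U V))"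
      using c1 unfolding K_def .
    show "\<forall>k\<in>Kset U V. ent q p (W k) = real L" using WU unfolding K_def by blast
    show "\<forall>k\<in>Kset U V. \<forall>\<omega>\<in>set_pmf p. W k \<omega> \<in> vecs L" using WU unfolding K_def by blast
    show "real (card (vecs L :: (nat \<Rightarrow> 'f) set)) = q ^ L" by (rule vc(2))
    show "finite (vecs L :: (nat \<Rightarrow> 'f) set)" by (rule vc(1))
  qed
  have Sm: "S m \<subseteq> Kset U V" using S_sub m unfolding K_def by blast
  have Tn: "T n \<subseteq> Kset U V" using T_sub n unfolding K_def by blast
  have c7': "cmi q p (fam X (Kset_u V u)) (fam W (S m)) (fam (\<lambda>k \<omega>. (W k \<omega>, Z k \<omega>)) (T n)) = 0"
    using c7 u m n unfolding WZ_def by blast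
  have c6': "cmi q p (fam Y {1..U}) (fam W (S m))
      (\<lambda>\<omega>. ((\<lambda>\<omega> i. \<Sum>k\<in>Kset U V. W k \<omega> i) \<omega>, fam (\<lambda>k \<omega>. (W k \<omega>, Z k \<omega>)) (T n) \<omega>)) = 0"
    using c6 m n unfolding WZ_def sumW_def by blast
  have A: "real (card (S m \<inter> Kset_u V u)) * real L
     \<le> ent q p (\<lambda>\<omega>. (fam Z (S m \<inter> Kset_u V u) \<omega>, fam Z (T n) \<omega>)) - ent q p (fam Z (T n))"
    by (rule hsa.partA[OF I Sm Tn disj u c7'])
  have B: "ent q p (\<lambda>\<omega>. (fam Z (KsetU V (Uset U V (S m) (T n))) \<omega>, fam Z (T n) \<omega>)) - ent q p (fam Z (T n))
     \<ge> (if card (KsetU V (Uset U V (S m) (T n)) \<union> T n) = card (Kset U V)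
        then (real (card (Uset U V (S m) (T n))) - 1) * real L
        else real (card (Uset U V (S m) (T n))) * real L)"
    by (rule hsa.partB[OF I Sm Tn disj c6'])
  show ?thesis using A B unfolding cent_def K_def by simp
qed

end
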